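(* Let $n\ge2$, $d\ge1$, $\alpha\in(0,1)$ and let $\boldsymbol\sigma=(\sigma_1,\dots,\sigma_n)$ be arbitrary positive noise levels (heteroscedastic model, with $\sigma_i^\#=\sigma_{\pi^*(i)}$). If $\hat\pi$ is either $\pi^{\mathrm{LSNS}}$ (computed with the known noise levels) or $\pi^{\mathrm{LSL}}$, then $$\bar\kappa_\alpha(\hat\pi)\le 4\max\Big\{\Big(2\log\frac{8n^2}{\alpha}\Big)^{1/2},\ \Big(d\log\frac{4n^2}{\alpha}\Big)^{1/4}\Big\}.$$
   Context: Model: integers $n\ge2$, $d\ge1$. Unknown parameters: $\boldsymbol\theta=(\theta_1,\dots,\theta_n)$ with $\theta_i\in\mathbb R^d$, noise levels $\boldsymbol\sigma=(\sigma_1,\dots,\sigma_n)$ with $\sigma_i>0$, and a permutation $\pi^*\in\mathfrak S_n$ (the symmetric group on $\{1,\dots,n\}$). One observes $X_i=\theta_i+\sigma_i\xi_i$, $X_i^\#=\theta_{\pi^*(i)}+\sigma_i^\#\xi_i^\#$, $i=1,\dots,n$, where $\sigma_i^\#=\sigma_{\pi^*(i)}$ and $\xi_1,\dots,\xi_n,\xi_1^\#,\dots,\xi_n^\#$ are i.i.d. $\mathcal N(0,I_d)$. The law of the data is $\mathbf P_{\boldsymbol\theta,\boldsymbol\sigma,\pi^*}$. Ties in argmins are broken arbitrarily (measurably). Estimators: $\pi^{\mathrm{LSNS}}=\arg\min_{\pi\in\mathfrak S_n}\sum_{i=1}^n\frac{\|X_{\pi(i)}-X_i^\#\|^2}{\sigma_{\pi(i)}^2+(\sigma_i^\#)^2}$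 and $\pi^{\mathrm{LSL}}=\arg\min_{\pi\in\mathfrak S_n}\sum_{i=1}^n\log\|X_{\pi(i)}-X_i^\#\|^2$. Relative separation distance: $\bar\kappa(\boldsymbol\theta,\boldsymbol\sigma)=\min_{i\ne j}\frac{\|\theta_i-\theta_j\|}{(\sigma_i^2+\sigma_j^2)^{1/2}}$. Perceivable separation distance of an estimator $\hat\pi$: $\bar\kappa_\alpha(\hat\pi)=\inf\{\kappa>0:\ \max_{\pi\in\mathfrak S_n}\sup_{\boldsymbol\theta:\,\bar\kappa(\boldsymbol\theta,\boldsymbol\sigma)>\kappa}\mathbf P_{\boldsymbol\theta,\boldsymbol\sigma,\pi}(\hat\pi\ne\pi)\le\alpha\}$. *)

theory Defs
  imports "HOL-Probability.Probability"
begin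

text \<open>Vectors in R^d are represented as functions 'd => real over a finite index
type 'd (so d = CARD('d) >= 1); the n points are indexed by a finite type 'n.
An observation is the pair (X, X#).\<close>

type_synonym ('n, 'd) obs = "('n \<Rightarrow> 'd \<Rightarrow> real) \<times> ('n \<Rightarrow> 'd \<Rightarrow> real)"

definition sqdist :: "('d::finite \<Rightarrow> real) \<Rightarrow> ('d \<Rightarrow> real) \<Rightarrow> real" where
  "sqdist x y = (\<Sum>k\<in>UNIV. (x k - y k)^2)"

definition eucl_norm :: "('d::finite \<Rightarrow> real) \<Rightarrow> real" where
  "eucl_norm x = sqrt (\<Sum>k\<in>UNIV. (x k)^2)"

definition obs_space :: "('n::finite, 'd::finite) obs measure" where
  "obs_space = (PiM UNIV (\<lambda>i. PiM UNIV (\<lambda>k. borel))) \<Otimes>\<^sub>M (PiM UNIV (\<lambda>i. PiM UNIV (\<lambda>k. borel)))"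

text \<open>Law P_{theta,sigma,pi*} of the data: X_i = theta_i + sigma_i xi_i and
X#_i = theta_{pi*(i)} + sigma_{pi*(i)} xi#_i with all xi, xi# i.i.d. N(0, I_d);
i.e. all coordinates are independent Gaussians.\<close>
definition data_law ::
  "('n::finite \<Rightarrow> 'd::finite \<Rightarrow> real) \<Rightarrow> ('n \<Rightarrow> real) \<Rightarrow> ('n \<Rightarrow> 'n) \<Rightarrow> ('n, 'd) obs measure" where
  "data_law \<theta> \<sigma> \<pi> =
     (PiM UNIV (\<lambda>i. PiM UNIV (\<lambda>k. density lborel (normal_density (\<theta> i k) (\<sigma> i)))))
     \<Otimes>\<^sub>M
     (PiM UNIV (\<lambda>i. PiM UNIV (\<lambda>k. density lborel (normal_density (\<theta> (\<pi> i) k) (\<sigma> (\<pi> i))))))"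

definition rel_sep :: "('n::finite \<Rightarrow> 'd::finite \<Rightarrow> real) \<Rightarrow> ('n \<Rightarrow> real) \<Rightarrow> real" where
  "rel_sep \<theta> \<sigma> = Min {eucl_norm (\<lambda>k. \<theta> i k - \<theta> j k) / sqrt ((\<sigma> i)^2 + (\<sigma> j)^2) | i j. i \<noteq> j}"

definition crit_LSNS ::
  "('n::finite \<Rightarrow> real) \<Rightarrow> ('n \<Rightarrow> real) \<Rightarrow> ('n, 'd::finite) obs \<Rightarrow> ('n \<Rightarrow> 'n) \<Rightarrow> real" where
  "crit_LSNS \<sigma> \<sigma>s \<omega> \<tau> =
     (\<Sum>i\<in>UNIV. sqdist (fst \<omega> (\<tau> i)) (snd \<omega> i) / ((\<sigma> (\<tau> i))^2 + (\<sigma>s i)^2))"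

definition crit_LSL :: "('n::finite, 'd::finite) obs \<Rightarrow> ('n \<Rightarrow> 'n) \<Rightarrow> real" where
  "crit_LSL \<omega> \<tau> = (\<Sum>i\<in>UNIV. ln (sqdist (fst \<omega> (\<tau> i)) (snd \<omega> i)))"

text \<open>An estimator is a map est, where est sigma# omega is the estimated permutation
computed from the data omega and the (known) noise levels sigma# of the second sample.\<close>
definition is_LSNS :: "('n::finite \<Rightarrow> real) \<Rightarrow> (('n \<Rightarrow> real) \<Rightarrow> ('n, 'd::finite) obs \<Rightarrow> 'n \<Rightarrow> 'n) \<Rightarrow> bool" where
  "is_LSNS \<sigma> est \<longleftrightarrow> (\<forall>\<pi>. \<pi> permutes UNIV \<longrightarrow> (\<forall>\<omega>.
     est (\<sigma> \<circ> \<pi>) \<omega> permutes UNIV \<and>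
     (\<forall>\<tau>. \<tau> permutes UNIV \<longrightarrow>
        crit_LSNS \<sigma> (\<sigma> \<circ> \<pi>) \<omega> (est (\<sigma> \<circ> \<pi>) \<omega>) \<le> crit_LSNS \<sigma> (\<sigma> \<circ> \<pi>) \<omega> \<tau>)))"

definition is_LSL :: "('n::finite \<Rightarrow> real) \<Rightarrow> (('n \<Rightarrow> real) \<Rightarrow> ('n, 'd::finite) obs \<Rightarrow> 'n \<Rightarrow> 'n) \<Rightarrow> bool" where
  "is_LSL \<sigma> est \<longleftrightarrow> (\<forall>\<pi>. \<pi> permutes UNIV \<longrightarrow> (\<forall>\<omega>.
     est (\<sigma> \<circ> \<pi>) \<omega> permutes UNIV \<and>
     (\<forall>\<tau>. \<tau> permutes UNIV \<longrightarrow> crit_LSL \<omega> (est (\<sigma> \<circ> \<pi>) \<omega>) \<le> crit_LSL \<omega> \<tau>)))"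

text \<open>Perceivable separation distance kappa-bar_alpha(est), as an extended real
(infimum of the empty set is +infinity).\<close>
definition perceivable_sep ::
  "real \<Rightarrow> ('n::finite \<Rightarrow> real) \<Rightarrow> (('n \<Rightarrow> real) \<Rightarrow> ('n, 'd::finite) obs \<Rightarrow> 'n \<Rightarrow> 'n) \<Rightarrow> ereal" where
  "perceivable_sep \<alpha> \<sigma> est =
     (INF \<kappa> \<in> {\<kappa>. \<kappa> > 0 \<and>
        (\<forall>\<pi> (\<theta>::'n \<Rightarrow> 'd \<Rightarrow> real). \<pi> permutes UNIV \<longrightarrow> rel_sep \<theta> \<sigma> > \<kappa> \<longrightarrow>
           measure (data_law \<theta> \<sigma> \<pi>) {\<omega> \<in> space (data_law \<theta> \<sigma> \<pi>). est (\<sigma> \<circ> \<pi>) \<omega> \<noteq> \<pi>} \<le> \<alpha>)}.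
      ereal \<kappa>)"

end

theory Submission
  imports Defs
begin


definition NN :: "real \<Rightarrow> real \<Rightarrow> real measure" where
  "NN m s = density lborel (\<lambda>x. ennreal (normal_density m s x))"

lemma prob_NN: "s > 0 \<Longrightarrow> prob_space (NN m s)"
  unfolding NN_def by (rule prob_space_normal_density) simp

lemma sets_NN[simp, measurable_cong]: "sets (NN m s) = sets borel"
  by (simp add: NN_def)

lemma space_NN[simp]: "space (NN m s) = UNIV"
  by (simp add: NN_def)

lemma distr_cong_sets:
  assumes "sets N = sets N'"
  shows "distr M N f = distr M N' f"
  unfolding distr_def using assms sets_eq_imp_space_eq[OF assms] by simp

lemma distr_pair_snd':
  assumes A: "prob_space A" and B: "prob_space B"
  shows "distr (A \<Otimes>\<^sub>M B) B snd = B"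
proof -
  interpret A: prob_space A by (rule A)
  interpret B: prob_space B by (rule B)
  interpret P: pair_sigma_finite A B ..
  have "distr (A \<Otimes>\<^sub>M B) B snd = distr (distr (B \<Otimes>\<^sub>M A) (A \<Otimes>\<^sub>M B) (\<lambda>(x, y). (y, x))) B snd"
    by (simp add: P.distr_pair_swap[symmetric])
  also have "\<dots> = distr (B \<Otimes>\<^sub>M A) B (snd \<circ> (\<lambda>(x, y). (y, x)))"
    by (rule distr_distr) auto
  also have "snd \<circ> (\<lambda>(x, y). (y, x)) = fst" by auto
  also have "distr (B \<Otimes>\<^sub>M A) B fst = B" by (rule A.distr_pair_fst)
  finally show ?thesis .
qed

lemma conv2:
  fixes g :: "real \<Rightarrow> ennreal"
  assumes s1: "\<sigma>1 > 0" and s2: "\<sigma>2 > 0" and g[measurable]: "g \<in> borel_measurable borel"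
  shows "(\<integral>\<^sup>+u. \<integral>\<^sup>+v. g (u - v) \<partial>NN m2 \<sigma>2 \<partial>NN m1 \<sigma>1)
       = (\<integral>\<^sup>+w. ennreal (normal_density (m1 - m2) (sqrt (\<sigma>1\<^sup>2 + \<sigma>2\<^sup>2)) w) * g w \<partial>lborel)"
proof -
  interpret N1: prob_space "NN m1 \<sigma>1" by (rule prob_NN[OF s1])
  interpret N2: prob_space "NN m2 \<sigma>2" by (rule prob_NN[OF s2])
  interpret P: pair_prob_space "NN m1 \<sigma>1" "NN m2 \<sigma>2" ..
  let ?M = "NN m1 \<sigma>1 \<Otimes>\<^sub>M NN m2 \<sigma>2"
  have sM: "sets ?M = sets (borel \<Otimes>\<^sub>M borel)"
    by (rule sets_pair_measure_cong) simp_all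
  have mfst: "fst \<in> ?M \<rightarrow>\<^sub>M borel"
    unfolding measurable_cong_sets[OF sM refl] by simp
  have msnd: "snd \<in> ?M \<rightarrow>\<^sub>M borel"
    unfolding measurable_cong_sets[OF sM refl] by simp
  have d1: "distributed ?M lborel fst (normal_density m1 \<sigma>1)"
    unfolding distributed_def
  proof (intro conjI)
    have "distr ?M lborel fst = distr ?M (NN m1 \<sigma>1) fst" by (rule distr_cong_sets) simp
    also have "\<dots> = NN m1 \<sigma>1" by (rule N2.distr_pair_fst)
    finally show "distr ?M lborel fst = density lborel (normal_density m1 \<sigma>1)" by (simp add: NN_def)
    show "fst \<in> ?M \<rightarrow>\<^sub>M lborel" using mfst by (simp only: measurable_lborel1)
  qed simp
  have d2: "distributed ?M lborel snd (normal_density m2 \<sigma>2)"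
    unfolding distributed_def
  proof (intro conjI)
    have "distr ?M lborel snd = distr ?M (NN m2 \<sigma>2) snd" by (rule distr_cong_sets) simp
    also have "\<dots> = NN m2 \<sigma>2" by (rule distr_pair_snd'[OF prob_NN[OF s1] prob_NN[OF s2]])
    finally show "distr ?M lborel snd = density lborel (normal_density m2 \<sigma>2)" by (simp add: NN_def)
    show "snd \<in> ?M \<rightarrow>\<^sub>M lborel" using msnd by (simp only: measurable_lborel1)
  qed simp
  have ind: "P.indep_var borel fst borel snd"
  proof (subst P.indep_var_distribution_eq, intro conjI)
    show "fst \<in> ?M \<rightarrow>\<^sub>M borel" by (rule mfst)
    show "snd \<in> ?M \<rightarrow>\<^sub>M borel" by (rule msnd)
    have a: "distr ?M borel fst = NN m1 \<sigma>1"
      using N2.distr_pair_fst[of "NN m1 \<sigma>1"] distr_cong_sets[of borel "NN m1 \<sigma>1" ?M fst] by simp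
    have b: "distr ?M borel snd = NN m2 \<sigma>2"
      using distr_pair_snd'[OF prob_NN[OF s1] prob_NN[OF s2]] distr_cong_sets[of borel "NN m2 \<sigma>2" ?M snd] by simp
    have c: "distr ?M (borel \<Otimes>\<^sub>M borel) (\<lambda>x. (fst x, snd x)) = distr ?M ?M (\<lambda>x. x)"
      using distr_cong_sets[of "borel \<Otimes>\<^sub>M borel" ?M ?M "\<lambda>x. x"] sM by simp
    show "distr ?M borel fst \<Otimes>\<^sub>M distr ?M borel snd = distr ?M (borel \<Otimes>\<^sub>M borel) (\<lambda>x. (fst x, snd x))"
      unfolding a b c by simp
  qed
  have dd: "distributed ?M lborel (\<lambda>x. fst x - snd x) (normal_density (m1 - m2) (sqrt (\<sigma>1\<^sup>2 + \<sigma>2\<^sup>2)))"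
    by (rule P.diff_indep_normal[OF ind s1 s2 d1 d2])
  have mg: "(\<lambda>p. g (fst p - snd p)) \<in> borel_measurable ?M"
    unfolding measurable_cong_sets[OF sM refl] by measurable
  have "(\<integral>\<^sup>+u. \<integral>\<^sup>+v. g (u - v) \<partial>NN m2 \<sigma>2 \<partial>NN m1 \<sigma>1) = (\<integral>\<^sup>+p. g (fst p - snd p) \<partial>?M)"
    using N2.nn_integral_fst[OF mg] by simp
  also have "\<dots> = (\<integral>\<^sup>+w. ennreal (normal_density (m1 - m2) (sqrt (\<sigma>1\<^sup>2 + \<sigma>2\<^sup>2)) w) * g w \<partial>lborel)"
    by (rule distributed_nn_integral[OF dd, symmetric]) simp
  finally show ?thesis .
qed

lemma nested_prod:
  fixes N :: "'n::finite \<Rightarrow> 'd::finite \<Rightarrow> real measure" and h :: "'d \<Rightarrow> real \<Rightarrow> ennreal"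
  assumes P: "\<And>j k. prob_space (N j k)"
    and sN: "\<And>j k. sets (N j k) = sets borel"
    and h: "\<And>k. h k \<in> borel_measurable borel"
  shows "(\<integral>\<^sup>+y. (\<Prod>k\<in>UNIV. h k (y i k)) \<partial>PiM UNIV (\<lambda>j. PiM UNIV (N j)))
       = (\<Prod>k\<in>UNIV. \<integral>\<^sup>+v. h k v \<partial>N i k)"
proof -
  have hN: "h k \<in> borel_measurable (N j k)" for j k
    using h[of k] by (simp add: measurable_cong_sets[OF sN refl])
  interpret Pj: prob_space "PiM UNIV (N j)" for j
    by (rule prob_space_PiM) (rule P)
  interpret PS: product_sigma_finite "\<lambda>j. PiM UNIV (N j)"
    unfolding product_sigma_finite_def by (auto intro: prob_space_imp_sigma_finite Pj.prob_space_axioms)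
  interpret PSj: product_sigma_finite "N j" for j
    unfolding product_sigma_finite_def using P by (auto intro: prob_space_imp_sigma_finite) 
  define F where "F j z = (if j = i then (\<Prod>k\<in>UNIV. h k (z k)) else 1)" for j and z :: "'d \<Rightarrow> real"
  have Fm: "F j \<in> borel_measurable (PiM UNIV (N j))" for j
    unfolding F_def using hN by (auto intro!: borel_measurable_prod_ennreal measurable_compose[OF measurable_component_singleton])
  have eq: "(\<Prod>k\<in>UNIV. h k (y i k)) = (\<Prod>j\<in>UNIV. F j (y j))" for y :: "'n \<Rightarrow> 'd \<Rightarrow> real"
  proof -
    have "(\<Prod>j\<in>UNIV. F j (y j)) = F i (y i) * (\<Prod>j\<in>UNIV - {i}. F j (y j))"
      by (subst prod.remove[of UNIV i]) auto
    also have "(\<Prod>j\<in>UNIV - {i}. F j (y j)) = 1" by (rule prod.neutral) (auto simp: F_def)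
    finally show ?thesis by (simp add: F_def)
  qed
  have "(\<integral>\<^sup>+y. (\<Prod>k\<in>UNIV. h k (y i k)) \<partial>PiM UNIV (\<lambda>j. PiM UNIV (N j)))
      = (\<integral>\<^sup>+y. (\<Prod>j\<in>UNIV. F j (y j)) \<partial>PiM UNIV (\<lambda>j. PiM UNIV (N j)))"
    by (simp add: eq)
  also have "\<dots> = (\<Prod>j\<in>UNIV. integral\<^sup>N (PiM UNIV (N j)) (F j))"
    by (rule PS.product_nn_integral_prod) (auto intro: Fm)
  also have "\<dots> = integral\<^sup>N (PiM UNIV (N i)) (F i)"
  proof -
    have "(\<Prod>j\<in>UNIV. integral\<^sup>N (PiM UNIV (N j)) (F j)) = integral\<^sup>N (PiM UNIV (N i)) (F i) * (\<Prod>j\<in>UNIV - {i}. integral\<^sup>N (PiM UNIV (N j)) (F j))"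
      by (subst prod.remove[of UNIV i]) auto
    also have "(\<Prod>j\<in>UNIV - {i}. integral\<^sup>N (PiM UNIV (N j)) (F j)) = 1"
    proof (rule prod.neutral, rule ballI)
      fix j assume "j \<in> UNIV - {i}"
      then have "F j = (\<lambda>_. 1)" by (auto simp: F_def fun_eq_iff)
      then show "integral\<^sup>N (PiM UNIV (N j)) (F j) = 1" by (simp add: Pj.emeasure_space_1)
    qed
    finally show ?thesis by simp
  qed
  also have "\<dots> = (\<integral>\<^sup>+z. (\<Prod>k\<in>UNIV. h k (z k)) \<partial>PiM UNIV (N i))"
    by (rule nn_integral_cong) (simp add: F_def)
  also have "\<dots> = (\<Prod>k\<in>UNIV. \<integral>\<^sup>+v. h k v \<partial>N i k)"
    by (rule PSj.product_nn_integral_prod) (auto intro: hN)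
  finally show ?thesis .
qed

lemma data_law_NN:
  "data_law \<theta> \<sigma> \<pi> = PiM UNIV (\<lambda>j. PiM UNIV (\<lambda>k. NN (\<theta> j k) (\<sigma> j))) \<Otimes>\<^sub>M
                        PiM UNIV (\<lambda>j. PiM UNIV (\<lambda>k. NN (\<theta> (\<pi> j) k) (\<sigma> (\<pi> j))))"
  unfolding data_law_def NN_def ..

lemma sets_data_law: "sets (data_law \<theta> \<sigma> \<pi>) = sets obs_space"
  unfolding data_law_NN obs_space_def
  by (intro sets_pair_measure_cong sets_PiM_cong) simp_all

lemma space_data_law: "space (data_law \<theta> \<sigma> \<pi>) = space obs_space"
  by (rule sets_eq_imp_space_eq[OF sets_data_law])

lemma prob_data_law:
  assumes "\<And>i. \<sigma> i > 0"
  shows "prob_space (data_law \<theta> \<sigma> \<pi>)"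
  unfolding data_law_NN
  by (intro prob_space_pair prob_space_PiM prob_NN assms)

lemma meas_comp2:
  "(\<lambda>x. x a k) \<in> PiM UNIV (\<lambda>i. PiM UNIV (\<lambda>k. M)) \<rightarrow>\<^sub>M M"
proof (rule measurable_compose[where f="\<lambda>x. x a"])
  show "(\<lambda>x. x a) \<in> PiM UNIV (\<lambda>i. PiM UNIV (\<lambda>k. M)) \<rightarrow>\<^sub>M PiM UNIV (\<lambda>k. M)"
    by (rule measurable_component_singleton) simp
  show "(\<lambda>x. x k) \<in> PiM UNIV (\<lambda>k. M) \<rightarrow>\<^sub>M M"
    by (rule measurable_component_singleton) simp
qed

lemma meas_fst2[measurable]:
  "(\<lambda>x. fst x a k) \<in> (PiM UNIV (\<lambda>i. PiM UNIV (\<lambda>k. M))) \<Otimes>\<^sub>M N \<rightarrow>\<^sub>M M"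
  by (rule measurable_compose[where f=fst and g="\<lambda>x. x a k", OF measurable_fst meas_comp2])

lemma meas_snd2[measurable]:
  "(\<lambda>x. snd x a k) \<in> N \<Otimes>\<^sub>M (PiM UNIV (\<lambda>i. PiM UNIV (\<lambda>k. M))) \<rightarrow>\<^sub>M M"
  by (rule measurable_compose[where f=snd and g="\<lambda>x. x a k", OF measurable_snd meas_comp2])

lemma prod_data:
  fixes \<theta> :: "'n::finite \<Rightarrow> 'd::finite \<Rightarrow> real" and g :: "'d \<Rightarrow> real \<Rightarrow> ennreal"
  assumes sp: "\<And>i. \<sigma> i > 0" and g: "\<And>k. g k \<in> borel_measurable borel"
  shows "(\<integral>\<^sup>+\<omega>. (\<Prod>k\<in>UNIV. g k (fst \<omega> a k - snd \<omega> i k)) \<partial>data_law \<theta> \<sigma> \<pi>)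
       = (\<Prod>k\<in>UNIV. \<integral>\<^sup>+w. ennreal (normal_density (\<theta> a k - \<theta> (\<pi> i) k) (sqrt ((\<sigma> a)\<^sup>2 + (\<sigma> (\<pi> i))\<^sup>2)) w) * g k w \<partial>lborel)"
proof -
  let ?D1 = "PiM UNIV (\<lambda>j. PiM UNIV (\<lambda>k. NN (\<theta> j k) (\<sigma> j)))"
  let ?D2 = "PiM UNIV (\<lambda>j. PiM UNIV (\<lambda>k. NN (\<theta> (\<pi> j) k) (\<sigma> (\<pi> j))))"
  let ?B = "PiM UNIV (\<lambda>i::'n. PiM UNIV (\<lambda>k::'d. borel :: real measure))"
  interpret D2: prob_space ?D2 by (intro prob_space_PiM prob_NN sp)
  have sD: "sets (?D1 \<Otimes>\<^sub>M ?D2) = sets (?B \<Otimes>\<^sub>M ?B)"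
    by (intro sets_pair_measure_cong sets_PiM_cong) simp_all
  have gm[measurable]: "(\<lambda>(u, v). g k (u - v)) \<in> borel_measurable (borel \<Otimes>\<^sub>M borel)" for k
    using g[of k] by measurable
  have fm: "(\<lambda>\<omega>. \<Prod>k\<in>UNIV. g k (fst \<omega> a k - snd \<omega> i k)) \<in> borel_measurable (?D1 \<Otimes>\<^sub>M ?D2)"
    unfolding measurable_cong_sets[OF sD refl] using g by measurable
  have "(\<integral>\<^sup>+\<omega>. (\<Prod>k\<in>UNIV. g k (fst \<omega> a k - snd \<omega> i k)) \<partial>data_law \<theta> \<sigma> \<pi>)
      = (\<integral>\<^sup>+x. \<integral>\<^sup>+y. (\<Prod>k\<in>UNIV. g k (x a k - y i k)) \<partial>?D2 \<partial>?D1)"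
    unfolding data_law_NN using D2.nn_integral_fst[OF fm] by simp
  also have "\<dots> = (\<integral>\<^sup>+x. (\<Prod>k\<in>UNIV. \<integral>\<^sup>+v. g k (x a k - v) \<partial>NN (\<theta> (\<pi> i) k) (\<sigma> (\<pi> i))) \<partial>?D1)"
  proof (rule nn_integral_cong)
    fix x :: "'n \<Rightarrow> 'd \<Rightarrow> real"
    show "(\<integral>\<^sup>+y. (\<Prod>k\<in>UNIV. g k (x a k - y i k)) \<partial>?D2) = (\<Prod>k\<in>UNIV. \<integral>\<^sup>+v. g k (x a k - v) \<partial>NN (\<theta> (\<pi> i) k) (\<sigma> (\<pi> i)))"
      by (rule nested_prod[where N="\<lambda>j k. NN (\<theta> (\<pi> j) k) (\<sigma> (\<pi> j))" and h="\<lambda>k v. g k (x a k - v)"])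
         (auto intro: prob_NN sp measurable_compose[OF _ g])
  qed
  also have "\<dots> = (\<Prod>k\<in>UNIV. \<integral>\<^sup>+u. \<integral>\<^sup>+v. g k (u - v) \<partial>NN (\<theta> (\<pi> i) k) (\<sigma> (\<pi> i)) \<partial>NN (\<theta> a k) (\<sigma> a))"
  proof (rule nested_prod[where N="\<lambda>j k. NN (\<theta> j k) (\<sigma> j)" and h="\<lambda>k u. \<integral>\<^sup>+v. g k (u - v) \<partial>NN (\<theta> (\<pi> i) k) (\<sigma> (\<pi> i))"])
    fix k
    interpret Nk: prob_space "NN (\<theta> (\<pi> i) k) (\<sigma> (\<pi> i))" by (intro prob_NN sp)
    have "(\<lambda>(u, v). g k (u - v)) \<in> borel_measurable (borel \<Otimes>\<^sub>M NN (\<theta> (\<pi> i) k) (\<sigma> (\<pi> i)))"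
      using gm[of k] by (simp add: measurable_cong_sets[OF sets_pair_measure_cong[OF refl sets_NN] refl])
    then show "(\<lambda>u. \<integral>\<^sup>+v. g k (u - v) \<partial>NN (\<theta> (\<pi> i) k) (\<sigma> (\<pi> i))) \<in> borel_measurable borel"
      by (rule Nk.borel_measurable_nn_integral)
  qed (auto intro: prob_NN sp)
  also have "\<dots> = (\<Prod>k\<in>UNIV. \<integral>\<^sup>+w. ennreal (normal_density (\<theta> a k - \<theta> (\<pi> i) k) (sqrt ((\<sigma> a)\<^sup>2 + (\<sigma> (\<pi> i))\<^sup>2)) w) * g k w \<partial>lborel)"
    by (intro prod.cong refl conv2 sp g)
  finally show ?thesis .
qed



lemma aux_id1: "(y::real) \<noteq> 0 \<Longrightarrow> 1/2 + 1 / (2 * y\<^sup>2) - 1 / y = (y - 1)\<^sup>2 / (2 * y\<^sup>2)"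
  by (simp add: field_simps power2_eq_square)

lemma aux_id2: "(y::real) \<noteq> 0 \<Longrightarrow> (y - 1) * (y + 1) / (2 * y) = y / 2 - 1 / (2 * y)"
  by (simp add: field_simps power2_eq_square)

lemma aux_id3: "(1::real) + x \<noteq> 0 \<Longrightarrow> 2 + 2 * x \<noteq> 0 \<Longrightarrow> 2 / ((2 + 2 * x) * (2 + 2 * x)) = 1 / (2 * (1 + x)\<^sup>2)"
proof -
  have e: "(2 + 2*x) * (2 + 2*x) = 2 * (2 * (1+x)\<^sup>2)" by (simp add: power2_eq_square algebra_simps)
  show ?thesis unfolding e by simp
qed

lemma ln_upper:
  fixes u :: real assumes u: "u \<ge> 0"
  shows "ln (1 + u) \<le> u * (2 + u) / (2 * (1 + u))"
proof -
  let ?f = "\<lambda>x::real. (1 + x) / 2 - 1 / (2 * (1 + x)) - ln (1 + x)"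
  have "?f 0 \<le> ?f u"
  proof (rule DERIV_nonneg_imp_nondecreasing[OF u])
    fix x :: real assume x: "0 \<le> x" "x \<le> u"
    have "(?f has_real_derivative (1/2 + 1 / (2 * (1 + x)\<^sup>2) - 1 / (1 + x))) (at x)"
      using x by (auto intro!: derivative_eq_intros aux_id3)
    moreover have "1/2 + 1 / (2 * (1 + x)\<^sup>2) - 1 / (1 + x) = x\<^sup>2 / (2 * (1 + x)\<^sup>2)"
    proof -
      have "1 + x \<noteq> 0" using x by simp
      from aux_id1[OF this] show ?thesis by simp
    qed
    ultimately show "\<exists>y. (?f has_real_derivative y) (at x) \<and> 0 \<le> y" by auto
  qed
  moreover have "u * (2 + u) / (2 * (1 + u)) = (1 + u) / 2 - 1 / (2 * (1 + u))"
  proof -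
    have "1 + u \<noteq> 0" using u by simp
    from aux_id2[OF this] show ?thesis by (simp add: add.commute)
  qed
  ultimately show ?thesis by simp
qed

lemma aux_id4: "(y::real) \<noteq> 0 \<Longrightarrow> 1 / y - 1 + (y - 1) = (y - 1)\<^sup>2 / y"
  by (simp add: field_simps power2_eq_square)

lemma ln_lower:
  fixes u :: real assumes u: "u \<ge> 0"
  shows "u - u\<^sup>2 / 2 \<le> ln (1 + u)"
proof -
  let ?f = "\<lambda>x::real. ln (1 + x) - x + x\<^sup>2 / 2"
  have "?f 0 \<le> ?f u"
  proof (rule DERIV_nonneg_imp_nondecreasing[OF u])
    fix x :: real assume x: "0 \<le> x" "x \<le> u"
    have "(?f has_real_derivative (1 / (1 + x) - 1 + x)) (at x)"
      using x by (auto intro!: derivative_eq_intros)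
    moreover have "1 / (1 + x) - 1 + x = x\<^sup>2 / (1 + x)"
      using aux_id4[of "1 + x"] x by simp
    ultimately show "\<exists>y. (?f has_real_derivative y) (at x) \<and> 0 \<le> y" using x by auto
  qed
  then show ?thesis by simp
qed

lemma nd_sq_identity:
  fixes c :: real assumes s: "s > 0" and c: "c < 1/2"
  shows "normal_density m s w * exp (c * ((w - m) / s)\<^sup>2)
       = (1 / sqrt (1 - 2 * c)) * normal_density m (s / sqrt (1 - 2 * c)) w"
proof -
  define q where "q = 1 - 2 * c"
  have q: "q > 0" using c by (simp add: q_def)
  define A where "A = (w - m)\<^sup>2"
  have sq: "(s / sqrt q)\<^sup>2 = s\<^sup>2 / q" using q by (simp add: power_divide)
  have ex: "-A / (2 * s\<^sup>2) + c * (A / s\<^sup>2) = -A / (2 * (s / sqrt q)\<^sup>2)"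
    unfolding sq q_def using s q by (simp add: field_simps q_def)
  have e: "exp (-(w - m)\<^sup>2 / (2 * s\<^sup>2)) * exp (c * ((w - m) / s)\<^sup>2) = exp (-(w - m)\<^sup>2 / (2 * (s / sqrt q)\<^sup>2))"
    using ex unfolding exp_add[symmetric] A_def by (simp add: power_divide)
  have r: "1 / sqrt (2 * pi * s\<^sup>2) = (1 / sqrt q) * (1 / sqrt (2 * pi * (s / sqrt q)\<^sup>2))"
  proof -
    have "sqrt (2 * pi * (s / sqrt q)\<^sup>2) = sqrt (2 * pi * s\<^sup>2) / sqrt q"
      unfolding sq using q by (simp add: real_sqrt_divide real_sqrt_mult)
    then show ?thesis using q s by simp
  qed
  show ?thesis
    unfolding normal_density_def q_def[symmetric] r mult.assoc[symmetric]
    unfolding mult.assoc e[symmetric] by simp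
qed

lemma nd_lin_identity:
  fixes t :: real assumes s: "s > 0"
  shows "normal_density m s w * exp (t * ((w - m) / s))
       = exp (t\<^sup>2 / 2) * normal_density (m + t * s) s w"
proof -
  have ex: "-(w - m)\<^sup>2 / (2 * s\<^sup>2) + t * ((w - m) / s) = t\<^sup>2 / 2 + -(w - (m + t * s))\<^sup>2 / (2 * s\<^sup>2)"
    using s by (simp add: field_simps power2_eq_square)
  have e: "exp (-(w - m)\<^sup>2 / (2 * s\<^sup>2)) * exp (t * ((w - m) / s)) = exp (t\<^sup>2 / 2) * exp (-(w - (m + t * s))\<^sup>2 / (2 * s\<^sup>2))"
    unfolding exp_add[symmetric] ex ..
  show ?thesis
    unfolding normal_density_def mult.assoc e by (simp only: mult.left_commute)
qed

lemma nn_integral_nd: "s > 0 \<Longrightarrow> (\<integral>\<^sup>+w. ennreal (normal_density m s w) \<partial>lborel) = 1"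
  using prob_space.emeasure_space_1[OF prob_NN[of s m]] unfolding NN_def
  by (simp add: emeasure_density)



lemma int_sq:
  assumes s: "s > 0" and c: "c < 1/2"
  shows "(\<integral>\<^sup>+w. ennreal (normal_density m s w) * ennreal (exp (c * ((w - m) / s)\<^sup>2)) \<partial>lborel)
       = ennreal (1 / sqrt (1 - 2 * c))"
proof -
  have q: "1 - 2 * c > 0" using c by simp
  have "(\<integral>\<^sup>+w. ennreal (normal_density m s w) * ennreal (exp (c * ((w - m) / s)\<^sup>2)) \<partial>lborel)
      = (\<integral>\<^sup>+w. ennreal (1 / sqrt (1 - 2 * c)) * ennreal (normal_density m (s / sqrt (1 - 2 * c)) w) \<partial>lborel)"
  proof (intro nn_integral_cong)
    fix w
    have "ennreal (normal_density m s w) * ennreal (exp (c * ((w - m) / s)\<^sup>2)) = ennreal (normal_density m s w * exp (c * ((w - m) / s)\<^sup>2))"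
      by (rule ennreal_mult[symmetric]) auto
    also have "\<dots> = ennreal (1 / sqrt (1 - 2 * c) * normal_density m (s / sqrt (1 - 2 * c)) w)"
      by (simp only: nd_sq_identity[OF s c])
    also have "\<dots> = ennreal (1 / sqrt (1 - 2 * c)) * ennreal (normal_density m (s / sqrt (1 - 2 * c)) w)"
      by (rule ennreal_mult) (use q in auto)
    finally show "ennreal (normal_density m s w) * ennreal (exp (c * ((w - m) / s)\<^sup>2)) = ennreal (1 / sqrt (1 - 2 * c)) * ennreal (normal_density m (s / sqrt (1 - 2 * c)) w)" .
  qed
  also have "\<dots> = ennreal (1 / sqrt (1 - 2 * c)) * (\<integral>\<^sup>+w. ennreal (normal_density m (s / sqrt (1 - 2 * c)) w) \<partial>lborel)"
    by (rule nn_integral_cmult) simp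
  also have "\<dots> = ennreal (1 / sqrt (1 - 2 * c))"
    using s q by (simp add: nn_integral_nd)
  finally show ?thesis .
qed

lemma int_lin:
  assumes s: "s > 0"
  shows "(\<integral>\<^sup>+w. ennreal (normal_density m s w) * ennreal (exp (t * ((w - m) / s))) \<partial>lborel)
       = ennreal (exp (t\<^sup>2 / 2))"
proof -
  have "(\<integral>\<^sup>+w. ennreal (normal_density m s w) * ennreal (exp (t * ((w - m) / s))) \<partial>lborel)
      = (\<integral>\<^sup>+w. ennreal (exp (t\<^sup>2 / 2)) * ennreal (normal_density (m + t * s) s w) \<partial>lborel)"
  proof (intro nn_integral_cong)
    fix w
    have "ennreal (normal_density m s w) * ennreal (exp (t * ((w - m) / s))) = ennreal (normal_density m s w * exp (t * ((w - m) / s)))"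
      by (rule ennreal_mult[symmetric]) auto
    also have "\<dots> = ennreal (exp (t\<^sup>2 / 2) * normal_density (m + t * s) s w)"
      by (simp only: nd_lin_identity[OF s])
    also have "\<dots> = ennreal (exp (t\<^sup>2 / 2)) * ennreal (normal_density (m + t * s) s w)"
      by (rule ennreal_mult) auto
    finally show "ennreal (normal_density m s w) * ennreal (exp (t * ((w - m) / s))) = ennreal (exp (t\<^sup>2 / 2)) * ennreal (normal_density (m + t * s) s w)" .
  qed
  also have "\<dots> = ennreal (exp (t\<^sup>2 / 2)) * (\<integral>\<^sup>+w. ennreal (normal_density (m + t * s) s w) \<partial>lborel)"
    by (rule nn_integral_cmult) simp
  also have "\<dots> = ennreal (exp (t\<^sup>2 / 2))"
    using s by (simp add: nn_integral_nd)
  finally show ?thesis .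
qed

lemma int_zero:
  "(\<integral>\<^sup>+w. ennreal (normal_density m s w) * indicator {0} w \<partial>lborel) = 0"
proof -
  have "AE w in lborel. ennreal (normal_density m s w) * indicator {0} w = 0"
    using AE_lborel_singleton[of 0] by eventually_elim simp
  then show ?thesis by (subst nn_integral_0_iff_AE) auto
qed



definition Sd :: "('n \<Rightarrow> real) \<Rightarrow> ('n \<Rightarrow> 'n) \<Rightarrow> 'n \<Rightarrow> 'n \<Rightarrow> real" where
  "Sd \<sigma> \<pi> a i = sqrt ((\<sigma> a)\<^sup>2 + (\<sigma> (\<pi> i))\<^sup>2)"

definition Vd :: "('n \<Rightarrow> 'd \<Rightarrow> real) \<Rightarrow> ('n \<Rightarrow> real) \<Rightarrow> ('n \<Rightarrow> 'n) \<Rightarrow> 'n \<Rightarrow> 'n \<Rightarrow> ('n, 'd) obs \<Rightarrow> 'd \<Rightarrow> real" where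
  "Vd \<theta> \<sigma> \<pi> a i \<omega> k = (fst \<omega> a k - snd \<omega> i k - (\<theta> a k - \<theta> (\<pi> i) k)) / Sd \<sigma> \<pi> a i"

lemma Sd_pos:
  assumes "\<And>i. \<sigma> i > 0" shows "Sd \<sigma> \<pi> a i > 0"
proof -
  have "\<sigma> a > 0" "\<sigma> (\<pi> i) > 0" by (rule assms)+
  then show ?thesis unfolding Sd_def by (intro real_sqrt_gt_zero add_pos_pos) auto
qed

lemma mgf_sq:
  fixes \<theta> :: "'n::finite \<Rightarrow> 'd::finite \<Rightarrow> real"
  assumes sp: "\<And>i. \<sigma> i > 0" and c: "c < 1/2"
  shows "(\<integral>\<^sup>+\<omega>. ennreal (exp (c * (\<Sum>k\<in>UNIV. (Vd \<theta> \<sigma> \<pi> a i \<omega> k)\<^sup>2))) \<partial>data_law \<theta> \<sigma> \<pi>)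
       = ennreal ((1 / sqrt (1 - 2 * c)) ^ CARD('d))"
proof -
  let ?S = "Sd \<sigma> \<pi> a i"
  have Spos: "?S > 0" by (rule Sd_pos) (rule sp)
  define g where "g k w = ennreal (exp (c * ((w - (\<theta> a k - \<theta> (\<pi> i) k)) / ?S)\<^sup>2))" for k w
  have gm: "g k \<in> borel_measurable borel" for k unfolding g_def by measurable
  have pt: "ennreal (exp (c * (\<Sum>k\<in>UNIV. (Vd \<theta> \<sigma> \<pi> a i \<omega> k)\<^sup>2)))
      = (\<Prod>k\<in>UNIV. g k (fst \<omega> a k - snd \<omega> i k))" for \<omega>
  proof -
    have "exp (c * (\<Sum>k\<in>UNIV. (Vd \<theta> \<sigma> \<pi> a i \<omega> k)\<^sup>2)) = (\<Prod>k\<in>UNIV. exp (c * (Vd \<theta> \<sigma> \<pi> a i \<omega> k)\<^sup>2))"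
      by (simp add: sum_distrib_left exp_sum)
    then show ?thesis
      unfolding g_def Vd_def by (simp add: prod_ennreal)
  qed
  have "(\<integral>\<^sup>+\<omega>. ennreal (exp (c * (\<Sum>k\<in>UNIV. (Vd \<theta> \<sigma> \<pi> a i \<omega> k)\<^sup>2))) \<partial>data_law \<theta> \<sigma> \<pi>)
      = (\<integral>\<^sup>+\<omega>. (\<Prod>k\<in>UNIV. g k (fst \<omega> a k - snd \<omega> i k)) \<partial>data_law \<theta> \<sigma> \<pi>)"
    by (simp only: pt)
  also have "\<dots> = (\<Prod>k\<in>UNIV. \<integral>\<^sup>+w. ennreal (normal_density (\<theta> a k - \<theta> (\<pi> i) k) ?S w) * g k w \<partial>lborel)"
    unfolding Sd_def by (rule prod_data[OF sp gm])
  also have "\<dots> = (\<Prod>k\<in>(UNIV::'d set). ennreal (1 / sqrt (1 - 2 * c)))"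
  proof (rule prod.cong[OF refl])
    fix k
    show "(\<integral>\<^sup>+w. ennreal (normal_density (\<theta> a k - \<theta> (\<pi> i) k) ?S w) * g k w \<partial>lborel) = ennreal (1 / sqrt (1 - 2 * c))"
      unfolding g_def using int_sq[OF Spos c] by simp
  qed
  also have "\<dots> = ennreal (1 / sqrt (1 - 2 * c)) ^ CARD('d)"
    by simp
  also have "\<dots> = ennreal ((1 / sqrt (1 - 2 * c)) ^ CARD('d))"
    by (rule ennreal_power) (use c in simp)
  finally show ?thesis .
qed

lemma mgf_lin:
  fixes \<theta> :: "'n::finite \<Rightarrow> 'd::finite \<Rightarrow> real"
  assumes sp: "\<And>i. \<sigma> i > 0"
  shows "(\<integral>\<^sup>+\<omega>. ennreal (exp (\<Sum>k\<in>UNIV. t k * Vd \<theta> \<sigma> \<pi> a i \<omega> k)) \<partial>data_law \<theta> \<sigma> \<pi>)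
       = ennreal (exp ((\<Sum>k\<in>UNIV. (t k)\<^sup>2) / 2))"
proof -
  let ?S = "Sd \<sigma> \<pi> a i"
  have Spos: "?S > 0" by (rule Sd_pos) (rule sp)
  define g where "g k w = ennreal (exp (t k * ((w - (\<theta> a k - \<theta> (\<pi> i) k)) / ?S)))" for k w
  have gm: "g k \<in> borel_measurable borel" for k unfolding g_def by measurable
  have pt: "ennreal (exp (\<Sum>k\<in>UNIV. t k * Vd \<theta> \<sigma> \<pi> a i \<omega> k))
      = (\<Prod>k\<in>UNIV. g k (fst \<omega> a k - snd \<omega> i k))" for \<omega>
  proof -
    have "exp (\<Sum>k\<in>UNIV. t k * Vd \<theta> \<sigma> \<pi> a i \<omega> k) = (\<Prod>k\<in>UNIV. exp (t k * Vd \<theta> \<sigma> \<pi> a i \<omega> k))"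
      by (simp add: exp_sum)
    then show ?thesis
      unfolding g_def Vd_def by (simp add: prod_ennreal)
  qed
  have "(\<integral>\<^sup>+\<omega>. ennreal (exp (\<Sum>k\<in>UNIV. t k * Vd \<theta> \<sigma> \<pi> a i \<omega> k)) \<partial>data_law \<theta> \<sigma> \<pi>)
      = (\<integral>\<^sup>+\<omega>. (\<Prod>k\<in>UNIV. g k (fst \<omega> a k - snd \<omega> i k)) \<partial>data_law \<theta> \<sigma> \<pi>)"
    by (simp only: pt)
  also have "\<dots> = (\<Prod>k\<in>UNIV. \<integral>\<^sup>+w. ennreal (normal_density (\<theta> a k - \<theta> (\<pi> i) k) ?S w) * g k w \<partial>lborel)"
    unfolding Sd_def by (rule prod_data[OF sp gm])
  also have "\<dots> = (\<Prod>k\<in>UNIV. ennreal (exp ((t k)\<^sup>2 / 2)))"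
    unfolding g_def by (rule prod.cong[OF refl], rule int_lin[OF Spos])
  also have "\<dots> = ennreal (exp ((\<Sum>k\<in>UNIV. (t k)\<^sup>2) / 2))"
    by (simp add: prod_ennreal exp_sum sum_divide_distrib)
  finally show ?thesis .
qed

lemma null_eq:
  fixes \<theta> :: "'n::finite \<Rightarrow> 'd::finite \<Rightarrow> real"
  assumes sp: "\<And>i. \<sigma> i > 0"
  shows "(\<integral>\<^sup>+\<omega>. (\<Prod>k\<in>UNIV. indicator {0} (fst \<omega> a k - snd \<omega> i k)) \<partial>data_law \<theta> \<sigma> \<pi>) = 0"
proof -
  have "(\<integral>\<^sup>+\<omega>. (\<Prod>k\<in>UNIV. indicator {0} (fst \<omega> a k - snd \<omega> i k)) \<partial>data_law \<theta> \<sigma> \<pi>)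
     = (\<Prod>k\<in>UNIV. \<integral>\<^sup>+w. ennreal (normal_density (\<theta> a k - \<theta> (\<pi> i) k) (sqrt ((\<sigma> a)\<^sup>2 + (\<sigma> (\<pi> i))\<^sup>2)) w) * indicator {0} w \<partial>lborel)"
    by (rule prod_data[OF sp]) simp
  also have "\<dots> = (\<Prod>k\<in>(UNIV::'d set). 0)"
    by (rule prod.cong[OF refl], rule int_zero)
  also have "\<dots> = 0" by simp
  finally show ?thesis .
qed



lemma chernoff_measure:
  assumes P: "prob_space M" and A: "A \<in> sets M"
    and F: "F \<in> borel_measurable M"
    and ge: "\<And>\<omega>. \<omega> \<in> A \<Longrightarrow> 1 \<le> F \<omega>"
    and I: "(\<integral>\<^sup>+\<omega>. F \<omega> \<partial>M) = ennreal B" and B: "B \<ge> 0"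
  shows "measure M A \<le> B"
proof -
  interpret prob_space M by (rule P)
  have "emeasure M A = (\<integral>\<^sup>+\<omega>. indicator A \<omega> \<partial>M)"
    using A by simp
  also have "\<dots> \<le> (\<integral>\<^sup>+\<omega>. F \<omega> \<partial>M)"
    by (rule nn_integral_mono) (auto simp: indicator_def ge)
  finally have "ennreal (measure M A) \<le> ennreal B"
    using I by (simp add: emeasure_eq_measure)
  then show ?thesis using B by simp
qed

lemma sets_obs_pred:
  assumes "P \<in> obs_space \<rightarrow>\<^sub>M count_space UNIV"
  shows "{\<omega> \<in> space (data_law \<theta> \<sigma> \<pi>). P \<omega>} \<in> sets (data_law \<theta> \<sigma> \<pi>)"
proof -
  have "{\<omega> \<in> space obs_space. P \<omega>} \<in> sets obs_space"
    using assms by measurable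
  then show ?thesis by (simp add: space_data_law sets_data_law)
qed

lemma Vd_meas[measurable]:
  "(\<lambda>\<omega>. Vd \<theta> \<sigma> \<pi> a i \<omega> k) \<in> borel_measurable obs_space"
  unfolding Vd_def obs_space_def by measurable

lemma Vd_meas'[measurable]:
  "(\<lambda>\<omega>. Vd \<theta> \<sigma> \<pi> a i \<omega> k) \<in> borel_measurable (data_law \<theta>' \<sigma>' \<pi>')"
  using Vd_meas by (simp add: measurable_cong_sets[OF sets_data_law refl])

lemma tail_upper:
  fixes \<theta> :: "'n::finite \<Rightarrow> 'd::finite \<Rightarrow> real"
  assumes sp: "\<And>i. \<sigma> i > 0" and r: "r > 0"
  shows "measure (data_law \<theta> \<sigma> \<pi>)
     {\<omega> \<in> space (data_law \<theta> \<sigma> \<pi>). (\<Sum>k\<in>UNIV. (Vd \<theta> \<sigma> \<pi> a i \<omega> k)\<^sup>2) > real CARD('d) * (1 + 2 * r + 2 * r\<^sup>2)}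
     \<le> exp (- real CARD('d) * r\<^sup>2)"
proof -
  define d where "d = real CARD('d)"
  define l where "l = r / (1 + 2 * r)"
  define M where "M = d * (1 + 2 * r + 2 * r\<^sup>2)"
  let ?Y = "\<lambda>\<omega>. (\<Sum>k\<in>UNIV. (Vd \<theta> \<sigma> \<pi> a i \<omega> k)\<^sup>2)"
  have l0: "l \<ge> 0" and l1: "l < 1/2" using r by (auto simp: l_def field_simps)
  have q: "1 - 2 * l = 1 / (1 + 2 * r)" using r by (simp add: l_def field_simps)
  have I: "(\<integral>\<^sup>+\<omega>. ennreal (exp (- l * M)) * ennreal (exp (l * ?Y \<omega>)) \<partial>data_law \<theta> \<sigma> \<pi>)
      = ennreal (exp (- l * M) * (1 / sqrt (1 - 2 * l)) ^ CARD('d))"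
  proof -
    have "(\<integral>\<^sup>+\<omega>. ennreal (exp (- l * M)) * ennreal (exp (l * ?Y \<omega>)) \<partial>data_law \<theta> \<sigma> \<pi>)
        = ennreal (exp (- l * M)) * ennreal ((1 / sqrt (1 - 2 * l)) ^ CARD('d))"
      by (subst nn_integral_cmult) (simp_all add: mgf_sq[OF sp l1])
    also have "\<dots> = ennreal (exp (- l * M) * (1 / sqrt (1 - 2 * l)) ^ CARD('d))"
      by (rule ennreal_mult[symmetric]) (use l1 in auto)
    finally show ?thesis .
  qed
  have "measure (data_law \<theta> \<sigma> \<pi>) {\<omega> \<in> space (data_law \<theta> \<sigma> \<pi>). ?Y \<omega> > M}
        \<le> exp (- l * M) * (1 / sqrt (1 - 2 * l)) ^ CARD('d)"
  proof (rule chernoff_measure[OF prob_data_law[OF sp] _ _ _ I])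
    show "{\<omega> \<in> space (data_law \<theta> \<sigma> \<pi>). ?Y \<omega> > M} \<in> sets (data_law \<theta> \<sigma> \<pi>)"
      by measurable
    show "(\<lambda>\<omega>. ennreal (exp (- l * M)) * ennreal (exp (l * ?Y \<omega>))) \<in> borel_measurable (data_law \<theta> \<sigma> \<pi>)"
      by measurable
    fix \<omega> assume "\<omega> \<in> {\<omega> \<in> space (data_law \<theta> \<sigma> \<pi>). ?Y \<omega> > M}"
    then have "?Y \<omega> > M" by simp
    then have "l * M \<le> l * ?Y \<omega>" using l0 by (intro mult_left_mono) auto
    then have "1 \<le> exp (- l * M) * exp (l * ?Y \<omega>)"
      by (simp add: exp_add[symmetric])
    then show "1 \<le> ennreal (exp (- l * M)) * ennreal (exp (l * ?Y \<omega>))"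
      by (simp add: ennreal_mult[symmetric])
  qed (use l1 in simp)
  also have "\<dots> \<le> exp (- d * r\<^sup>2)"
  proof -
    have sq: "1 / sqrt (1 - 2 * l) = exp (ln (1 + 2 * r) / 2)"
      unfolding q using r by (simp add: real_sqrt_divide exp_ln ln_sqrt[symmetric])
    have pw: "(1 / sqrt (1 - 2 * l)) ^ CARD('d) = exp (d * (ln (1 + 2 * r) / 2))"
      unfolding sq d_def by (simp only: exp_of_nat_mult)
    have ln: "ln (1 + 2 * r) \<le> 2 * r * (2 + 2 * r) / (2 * (1 + 2 * r))"
      using ln_upper[of "2 * r"] r by simp
    have key: "r * (1 + 2 * r + 2 * r\<^sup>2) / (1 + 2 * r) - r\<^sup>2 = 2 * r * (2 + 2 * r) / (2 * (1 + 2 * r)) / 2"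
      using r by (simp add: field_simps power2_eq_square)
    have d0: "d \<ge> 0" by (simp add: d_def)
    have "d * (ln (1 + 2 * r) / 2) \<le> d * (2 * r * (2 + 2 * r) / (2 * (1 + 2 * r)) / 2)"
      by (rule mult_left_mono[OF divide_right_mono[OF ln] d0]) simp
    also have "\<dots> = d * (r * (1 + 2 * r + 2 * r\<^sup>2) / (1 + 2 * r)) - d * r\<^sup>2"
      unfolding key[symmetric] by (simp add: algebra_simps)
    also have "\<dots> = l * M - d * r\<^sup>2" by (simp add: l_def M_def)
    finally have "- l * M + d * (ln (1 + 2 * r) / 2) \<le> - d * r\<^sup>2" by simp
    then show ?thesis unfolding pw exp_add[symmetric] by simp
  qed
  finally show ?thesis by (simp add: M_def d_def)
qed

lemma tail_lower:
  fixes \<theta> :: "'n::finite \<Rightarrow> 'd::finite \<Rightarrow> real"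
  assumes sp: "\<And>i. \<sigma> i > 0" and r: "r > 0"
  shows "measure (data_law \<theta> \<sigma> \<pi>)
     {\<omega> \<in> space (data_law \<theta> \<sigma> \<pi>). (\<Sum>k\<in>UNIV. (Vd \<theta> \<sigma> \<pi> a i \<omega> k)\<^sup>2) < real CARD('d) * (1 - 2 * r)}
     \<le> exp (- real CARD('d) * r\<^sup>2)"
proof -
  define d where "d = real CARD('d)"
  define M where "M = d * (1 - 2 * r)"
  let ?Y = "\<lambda>\<omega>. (\<Sum>k\<in>UNIV. (Vd \<theta> \<sigma> \<pi> a i \<omega> k)\<^sup>2)"
  have c: "- r < 1/2" using r by simp
  have I: "(\<integral>\<^sup>+\<omega>. ennreal (exp (r * M)) * ennreal (exp (- (r * ?Y \<omega>))) \<partial>data_law \<theta> \<sigma> \<pi>)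
      = ennreal (exp (r * M) * (1 / sqrt (1 + 2 * r)) ^ CARD('d))"
  proof -
    have m: "(\<integral>\<^sup>+\<omega>. ennreal (exp (- (r * ?Y \<omega>))) \<partial>data_law \<theta> \<sigma> \<pi>) = ennreal ((1 / sqrt (1 - 2 * (- r))) ^ CARD('d))"
      using mgf_sq[where \<sigma>=\<sigma> and \<theta>=\<theta> and \<pi>=\<pi> and a=a and i=i, OF sp c] by simp
    have "(\<integral>\<^sup>+\<omega>. ennreal (exp (r * M)) * ennreal (exp (- (r * ?Y \<omega>))) \<partial>data_law \<theta> \<sigma> \<pi>)
        = ennreal (exp (r * M)) * ennreal ((1 / sqrt (1 - 2 * (- r))) ^ CARD('d))"
      by (subst nn_integral_cmult) (simp, simp only: m)
    also have "\<dots> = ennreal (exp (r * M) * (1 / sqrt (1 + 2 * r)) ^ CARD('d))"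
      by (subst ennreal_mult[symmetric]) (use r in auto)
    finally show ?thesis .
  qed
  have "measure (data_law \<theta> \<sigma> \<pi>) {\<omega> \<in> space (data_law \<theta> \<sigma> \<pi>). ?Y \<omega> < M}
        \<le> exp (r * M) * (1 / sqrt (1 + 2 * r)) ^ CARD('d)"
  proof (rule chernoff_measure[OF prob_data_law[OF sp] _ _ _ I])
    show "{\<omega> \<in> space (data_law \<theta> \<sigma> \<pi>). ?Y \<omega> < M} \<in> sets (data_law \<theta> \<sigma> \<pi>)"
      by measurable
    show "(\<lambda>\<omega>. ennreal (exp (r * M)) * ennreal (exp (- (r * ?Y \<omega>)))) \<in> borel_measurable (data_law \<theta> \<sigma> \<pi>)"
      by measurable
    fix \<omega> assume "\<omega> \<in> {\<omega> \<in> space (data_law \<theta> \<sigma> \<pi>). ?Y \<omega> < M}"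
    then have "?Y \<omega> < M" by simp
    then have "r * ?Y \<omega> \<le> r * M" using r by (intro mult_left_mono) auto
    then have "1 \<le> exp (r * M) * exp (- (r * ?Y \<omega>))"
      by (simp add: exp_add[symmetric])
    then show "1 \<le> ennreal (exp (r * M)) * ennreal (exp (- (r * ?Y \<omega>)))"
      by (simp add: ennreal_mult[symmetric])
  qed (use r in simp)
  also have "\<dots> \<le> exp (- d * r\<^sup>2)"
  proof -
    have sq: "1 / sqrt (1 + 2 * r) = exp (- (ln (1 + 2 * r) / 2))"
      using r by (simp add: exp_minus exp_ln ln_sqrt[symmetric] inverse_eq_divide)
    have pw: "(1 / sqrt (1 + 2 * r)) ^ CARD('d) = exp (d * (- (ln (1 + 2 * r) / 2)))"
      unfolding sq d_def by (simp only: exp_of_nat_mult)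
    have ln: "2 * r - (2 * r)\<^sup>2 / 2 \<le> ln (1 + 2 * r)"
      using ln_lower[of "2 * r"] r by simp
    have d0: "d \<ge> 0" by (simp add: d_def)
    have "d * (2 * r - (2 * r)\<^sup>2 / 2) \<le> d * ln (1 + 2 * r)"
      by (rule mult_left_mono[OF ln d0])
    then have "r * M + d * (- (ln (1 + 2 * r) / 2)) \<le> - d * r\<^sup>2"
      unfolding M_def by (simp add: algebra_simps power2_eq_square)
    then show ?thesis unfolding pw exp_add[symmetric] by simp
  qed
  finally show ?thesis by (simp add: M_def d_def)
qed

lemma tail_lin:
  fixes \<theta> :: "'n::finite \<Rightarrow> 'd::finite \<Rightarrow> real" and t :: "'d \<Rightarrow> real"
  assumes sp: "\<And>i. \<sigma> i > 0" and tau: "\<tau> \<ge> 0"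
  shows "measure (data_law \<theta> \<sigma> \<pi>)
     {\<omega> \<in> space (data_law \<theta> \<sigma> \<pi>). (\<Sum>k\<in>UNIV. t k * Vd \<theta> \<sigma> \<pi> a i \<omega> k) < - \<tau> * (\<Sum>k\<in>UNIV. (t k)\<^sup>2)}
     \<le> exp (- \<tau>\<^sup>2 * (\<Sum>k\<in>UNIV. (t k)\<^sup>2) / 2)"
proof -
  define \<nu> where "\<nu> = (\<Sum>k\<in>UNIV. (t k)\<^sup>2)"
  let ?Y = "\<lambda>\<omega>. (\<Sum>k\<in>UNIV. t k * Vd \<theta> \<sigma> \<pi> a i \<omega> k)"
  have sq: "(\<Sum>k\<in>UNIV. (- \<tau> * t k)\<^sup>2) = \<tau>\<^sup>2 * \<nu>"
    unfolding \<nu>_def by (simp add: power_mult_distrib sum_distrib_left)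
  have ml: "(\<integral>\<^sup>+\<omega>. ennreal (exp (- (\<tau> * ?Y \<omega>))) \<partial>data_law \<theta> \<sigma> \<pi>) = ennreal (exp (\<tau>\<^sup>2 * \<nu> / 2))"
  proof -
    have e: "\<And>\<omega>. - (\<tau> * ?Y \<omega>) = (\<Sum>k\<in>UNIV. (- \<tau> * t k) * Vd \<theta> \<sigma> \<pi> a i \<omega> k)"
      by (simp add: sum_distrib_left mult.assoc sum_negf[symmetric])
    have "(\<integral>\<^sup>+\<omega>. ennreal (exp (- (\<tau> * ?Y \<omega>))) \<partial>data_law \<theta> \<sigma> \<pi>)
        = (\<integral>\<^sup>+\<omega>. ennreal (exp (\<Sum>k\<in>UNIV. (- \<tau> * t k) * Vd \<theta> \<sigma> \<pi> a i \<omega> k)) \<partial>data_law \<theta> \<sigma> \<pi>)"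
      by (simp only: e)
    also have "\<dots> = ennreal (exp ((\<Sum>k\<in>UNIV. (- \<tau> * t k)\<^sup>2) / 2))"
      by (rule mgf_lin[where \<sigma>=\<sigma> and t="\<lambda>k. - \<tau> * t k" and \<theta>=\<theta> and \<pi>=\<pi> and a=a and i=i, OF sp])
    also have "\<dots> = ennreal (exp (\<tau>\<^sup>2 * \<nu> / 2))" by (simp only: sq)
    finally show ?thesis .
  qed
  have I: "(\<integral>\<^sup>+\<omega>. ennreal (exp (- \<tau>\<^sup>2 * \<nu>)) * ennreal (exp (- (\<tau> * ?Y \<omega>))) \<partial>data_law \<theta> \<sigma> \<pi>)
      = ennreal (exp (- \<tau>\<^sup>2 * \<nu>) * exp (\<tau>\<^sup>2 * \<nu> / 2))"
  proof -
    have "(\<integral>\<^sup>+\<omega>. ennreal (exp (- \<tau>\<^sup>2 * \<nu>)) * ennreal (exp (- (\<tau> * ?Y \<omega>))) \<partial>data_law \<theta> \<sigma> \<pi>)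
        = ennreal (exp (- \<tau>\<^sup>2 * \<nu>)) * ennreal (exp (\<tau>\<^sup>2 * \<nu> / 2))"
      by (subst nn_integral_cmult) (simp_all add: ml)
    also have "\<dots> = ennreal (exp (- \<tau>\<^sup>2 * \<nu>) * exp (\<tau>\<^sup>2 * \<nu> / 2))"
      by (subst ennreal_mult[symmetric]) auto
    finally show ?thesis .
  qed
  have "measure (data_law \<theta> \<sigma> \<pi>) {\<omega> \<in> space (data_law \<theta> \<sigma> \<pi>). ?Y \<omega> < - \<tau> * \<nu>}
        \<le> exp (- \<tau>\<^sup>2 * \<nu>) * exp (\<tau>\<^sup>2 * \<nu> / 2)"
  proof (rule chernoff_measure[OF prob_data_law[OF sp] _ _ _ I])
    show "{\<omega> \<in> space (data_law \<theta> \<sigma> \<pi>). ?Y \<omega> < - \<tau> * \<nu>} \<in> sets (data_law \<theta> \<sigma> \<pi>)"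
      by measurable
    show "(\<lambda>\<omega>. ennreal (exp (- \<tau>\<^sup>2 * \<nu>)) * ennreal (exp (- (\<tau> * ?Y \<omega>)))) \<in> borel_measurable (data_law \<theta> \<sigma> \<pi>)"
      by measurable
    fix \<omega> assume "\<omega> \<in> {\<omega> \<in> space (data_law \<theta> \<sigma> \<pi>). ?Y \<omega> < - \<tau> * \<nu>}"
    then have "?Y \<omega> < - \<tau> * \<nu>" by simp
    then have "\<tau> * ?Y \<omega> \<le> \<tau> * (- \<tau> * \<nu>)" using tau by (intro mult_left_mono) auto
    then have "1 \<le> exp (- \<tau>\<^sup>2 * \<nu>) * exp (- (\<tau> * ?Y \<omega>))"
      by (simp add: exp_add[symmetric] power2_eq_square)
    then show "1 \<le> ennreal (exp (- \<tau>\<^sup>2 * \<nu>)) * ennreal (exp (- (\<tau> * ?Y \<omega>)))"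
      by (simp add: ennreal_mult[symmetric])
  qed simp
  also have "\<dots> = exp (- \<tau>\<^sup>2 * \<nu> / 2)"
    by (simp add: exp_add[symmetric])
  finally show ?thesis by (simp add: \<nu>_def)
qed

lemma tail_null:
  fixes \<theta> :: "'n::finite \<Rightarrow> 'd::finite \<Rightarrow> real"
  assumes sp: "\<And>i. \<sigma> i > 0"
  shows "measure (data_law \<theta> \<sigma> \<pi>)
     {\<omega> \<in> space (data_law \<theta> \<sigma> \<pi>). \<forall>k. fst \<omega> a k = snd \<omega> i k} = 0"
proof -
  have "measure (data_law \<theta> \<sigma> \<pi>) {\<omega> \<in> space (data_law \<theta> \<sigma> \<pi>). \<forall>k. fst \<omega> a k = snd \<omega> i k} \<le> 0"
  proof (rule chernoff_measure[OF prob_data_law[OF sp], where F="\<lambda>\<omega>. (\<Prod>k\<in>UNIV. indicator {0} (fst \<omega> a k - snd \<omega> i k))"])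
    show "{\<omega> \<in> space (data_law \<theta> \<sigma> \<pi>). \<forall>k. fst \<omega> a k = snd \<omega> i k} \<in> sets (data_law \<theta> \<sigma> \<pi>)"
    proof -
      have "{\<omega> \<in> space obs_space. \<forall>k. fst \<omega> a k = snd \<omega> i k} \<in> sets obs_space"
        unfolding obs_space_def by measurable
      then show ?thesis by (simp add: space_data_law sets_data_law)
    qed
    show "(\<lambda>\<omega>. (\<Prod>k\<in>UNIV. indicator {0} (fst \<omega> a k - snd \<omega> i k) :: ennreal)) \<in> borel_measurable (data_law \<theta> \<sigma> \<pi>)"
    proof -
      have "(\<lambda>\<omega>. (\<Prod>k\<in>UNIV. indicator {0} (fst \<omega> a k - snd \<omega> i k) :: ennreal)) \<in> borel_measurable obs_space"
        unfolding obs_space_def by measurable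
      then show ?thesis by (simp add: measurable_cong_sets[OF sets_data_law refl])
    qed
    show "(\<integral>\<^sup>+\<omega>. (\<Prod>k\<in>UNIV. indicator {0} (fst \<omega> a k - snd \<omega> i k)) \<partial>data_law \<theta> \<sigma> \<pi>) = ennreal 0"
      using null_eq[OF sp] by simp
  qed (auto simp: indicator_def)
  then show ?thesis using measure_nonneg[of "data_law \<theta> \<sigma> \<pi>"] by (meson antisym)
qed



lemma det_LSNS:
  fixes D :: "'n::finite \<Rightarrow> 'n \<Rightarrow> real"
  assumes tp: "\<tau> \<noteq> \<pi>"
    and le: "\<And>i. D (\<pi> i) i \<le> M" and gt: "\<And>i a. a \<noteq> \<pi> i \<Longrightarrow> D a i > M"
  shows "(\<Sum>i\<in>UNIV. D (\<pi> i) i) < (\<Sum>i\<in>UNIV. D (\<tau> i) i)"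
proof (rule sum_strict_mono_ex1)
  show "\<forall>i\<in>UNIV. D (\<pi> i) i \<le> D (\<tau> i) i"
  proof
    fix i show "D (\<pi> i) i \<le> D (\<tau> i) i"
      using le[of i] gt[of "\<tau> i" i] by (cases "\<tau> i = \<pi> i") auto
  qed
  from tp obtain i where "\<tau> i \<noteq> \<pi> i" by auto
  then have "D (\<pi> i) i < D (\<tau> i) i"
    using le[of i] gt[of "\<tau> i" i] by auto
  then show "\<exists>i\<in>UNIV. D (\<pi> i) i < D (\<tau> i) i" by blast
qed simp

lemma det_LSL:
  fixes D :: "'n::finite \<Rightarrow> 'n \<Rightarrow> real" and \<sigma> :: "'n \<Rightarrow> real"
  assumes pp: "\<pi> permutes UNIV" and tp': "\<tau> permutes UNIV" and tp: "\<tau> \<noteq> \<pi>"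
    and sp: "\<And>i. \<sigma> i > 0" and M: "M > 0"
    and pos: "\<And>i. D (\<pi> i) i > 0"
    and le: "\<And>i. D (\<pi> i) i \<le> M" and gt: "\<And>i a. a \<noteq> \<pi> i \<Longrightarrow> D a i > M"
  shows "(\<Sum>i\<in>UNIV. ln (D (\<pi> i) i * ((\<sigma> (\<pi> i))\<^sup>2 + (\<sigma> (\<pi> i))\<^sup>2)))
       < (\<Sum>i\<in>UNIV. ln (D (\<tau> i) i * ((\<sigma> (\<tau> i))\<^sup>2 + (\<sigma> (\<pi> i))\<^sup>2)))"
proof -
  let ?f = "\<lambda>i. ln (D (\<pi> i) i * ((\<sigma> (\<pi> i))\<^sup>2 + (\<sigma> (\<pi> i))\<^sup>2)) + (ln (\<sigma> (\<tau> i)) - ln (\<sigma> (\<pi> i)))"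
  have s1: "(\<Sum>i\<in>UNIV. ln (\<sigma> (\<tau> i))) = (\<Sum>i\<in>UNIV. ln (\<sigma> i))"
    using sum.permute[OF tp', of "\<lambda>i. ln (\<sigma> i)"] by (simp add: comp_def)
  have s2: "(\<Sum>i\<in>UNIV. ln (\<sigma> (\<pi> i))) = (\<Sum>i\<in>UNIV. ln (\<sigma> i))"
    using sum.permute[OF pp, of "\<lambda>i. ln (\<sigma> i)"] by (simp add: comp_def)
  have "(\<Sum>i\<in>UNIV. ?f i) = (\<Sum>i\<in>UNIV. ln (D (\<pi> i) i * ((\<sigma> (\<pi> i))\<^sup>2 + (\<sigma> (\<pi> i))\<^sup>2)))
        + ((\<Sum>i\<in>UNIV. ln (\<sigma> (\<tau> i))) - (\<Sum>i\<in>UNIV. ln (\<sigma> (\<pi> i))))"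
    by (simp add: sum.distrib sum_subtractf)
  also have "\<dots> = (\<Sum>i\<in>UNIV. ln (D (\<pi> i) i * ((\<sigma> (\<pi> i))\<^sup>2 + (\<sigma> (\<pi> i))\<^sup>2)))"
    using s1 s2 by simp
  finally have eq: "(\<Sum>i\<in>UNIV. ?f i) = (\<Sum>i\<in>UNIV. ln (D (\<pi> i) i * ((\<sigma> (\<pi> i))\<^sup>2 + (\<sigma> (\<pi> i))\<^sup>2)))" .
  have key: "?f i < ln (D (\<tau> i) i * ((\<sigma> (\<tau> i))\<^sup>2 + (\<sigma> (\<pi> i))\<^sup>2))" if ne: "\<tau> i \<noteq> \<pi> i" for i
  proof -
    define a where "a = \<tau> i"
    define b where "b = \<pi> i"
    have sa: "\<sigma> a > 0" and sb: "\<sigma> b > 0" by (rule sp)+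
    have x: "D a i > M" using gt[of a i] ne by (simp add: a_def b_def)
    have y: "D b i > 0" "D b i \<le> M" using pos[of i] le[of i] by (simp_all add: b_def)
    have amgm: "2 * \<sigma> a * \<sigma> b \<le> (\<sigma> a)\<^sup>2 + (\<sigma> b)\<^sup>2"
      using sum_squares_bound[of "\<sigma> a" "\<sigma> b"] by simp
    have "ln (D b i * ((\<sigma> b)\<^sup>2 + (\<sigma> b)\<^sup>2)) + (ln (\<sigma> a) - ln (\<sigma> b))
        = ln (D b i) + ln 2 + ln (\<sigma> b) + ln (\<sigma> a)"
      using y sa sb by (simp add: ln_mult power2_eq_square)
    also have "\<dots> \<le> ln M + ln 2 + ln (\<sigma> b) + ln (\<sigma> a)"
      using y M by simp
    also have "\<dots> = ln (M * (2 * \<sigma> a * \<sigma> b))"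
      using M sa sb by (simp add: ln_mult)
    also have "\<dots> < ln (D a i * ((\<sigma> a)\<^sup>2 + (\<sigma> b)\<^sup>2))"
    proof (subst ln_less_cancel_iff)
      show "0 < M * (2 * \<sigma> a * \<sigma> b)" using M sa sb by simp
      show "0 < D a i * ((\<sigma> a)\<^sup>2 + (\<sigma> b)\<^sup>2)" using x M sa by (simp add: add_pos_nonneg)
      have "M * (2 * \<sigma> a * \<sigma> b) < D a i * (2 * \<sigma> a * \<sigma> b)"
        using x sa sb by simp
      also have "\<dots> \<le> D a i * ((\<sigma> a)\<^sup>2 + (\<sigma> b)\<^sup>2)"
        using amgm x M by (intro mult_left_mono) auto
      finally show "M * (2 * \<sigma> a * \<sigma> b) < D a i * ((\<sigma> a)\<^sup>2 + (\<sigma> b)\<^sup>2)" .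
    qed
    finally show ?thesis by (simp add: a_def b_def)
  qed
  have "(\<Sum>i\<in>UNIV. ?f i) < (\<Sum>i\<in>UNIV. ln (D (\<tau> i) i * ((\<sigma> (\<tau> i))\<^sup>2 + (\<sigma> (\<pi> i))\<^sup>2)))"
  proof (rule sum_strict_mono_ex1)
    show "\<forall>i\<in>UNIV. ?f i \<le> ln (D (\<tau> i) i * ((\<sigma> (\<tau> i))\<^sup>2 + (\<sigma> (\<pi> i))\<^sup>2))"
    proof
      fix i show "?f i \<le> ln (D (\<tau> i) i * ((\<sigma> (\<tau> i))\<^sup>2 + (\<sigma> (\<pi> i))\<^sup>2))"
        using key[of i] by (cases "\<tau> i = \<pi> i") auto
    qed
    from tp obtain i where "\<tau> i \<noteq> \<pi> i" by auto
    then show "\<exists>i\<in>UNIV. ?f i < ln (D (\<tau> i) i * ((\<sigma> (\<tau> i))\<^sup>2 + (\<sigma> (\<pi> i))\<^sup>2))"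
      using key by auto
  qed simp
  then show ?thesis using eq by simp
qed



lemma arith_main:
  fixes d L q K Y cv r :: real
  assumes d: "d > 0" and L: "L > 0" and q: "q > K"
    and K1: "4 * sqrt (2 * L) \<le> K" and K2: "16 * sqrt (d * L) \<le> K\<^sup>2"
    and r: "r = sqrt (L / d)"
    and Y: "Y \<ge> d * (1 - 2 * r)" and cv: "cv \<ge> - (sqrt (2 * L / q\<^sup>2) * q\<^sup>2)"
  shows "Y + 2 * cv + q\<^sup>2 > d * (1 + 2 * r + 2 * r\<^sup>2)"
proof -
  have K0: "K \<ge> 0" using K1 real_sqrt_ge_zero[of "2 * L"] L by linarith
  have q0: "q > 0" using q K0 by simp
  have dr: "d * r = sqrt (d * L)"
  proof -
    have "d * L = d\<^sup>2 * (L / d)" using d by (simp add: power2_eq_square)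
    then have "sqrt (d * L) = sqrt (d\<^sup>2) * sqrt (L / d)" by (simp only: real_sqrt_mult)
    then show ?thesis using d r by simp
  qed
  have dr2: "d * r\<^sup>2 = L" using d L r by simp
  have cv': "sqrt (2 * L / q\<^sup>2) * q\<^sup>2 = sqrt (2 * L) * q"
    using q0 by (simp add: real_sqrt_divide power2_eq_square)
  have qK: "q\<^sup>2 > K\<^sup>2" using q K0 by (simp add: power_strict_mono)
  have t1: "2 * (sqrt (2 * L) * q) \<le> q\<^sup>2 / 2"
  proof -
    have "4 * sqrt (2 * L) \<le> q" using K1 q by simp
    then have "4 * sqrt (2 * L) * q \<le> q * q" using q0 by (intro mult_right_mono) auto
    then show ?thesis by (simp add: power2_eq_square)
  qed
  have t2: "2 * L \<le> q\<^sup>2 / 16"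
  proof -
    have "4 * sqrt (2 * L) \<le> q" using K1 q by simp
    then have "(4 * sqrt (2 * L))\<^sup>2 \<le> q\<^sup>2" using L by (intro power_mono) auto
    then show ?thesis using L by (simp add: power_mult_distrib)
  qed
  have t3: "4 * sqrt (d * L) \<le> q\<^sup>2 / 4" using K2 qK by simp
  have e1: "d * (1 + 2 * r + 2 * r\<^sup>2) = d + 2 * (d * r) + 2 * (d * r\<^sup>2)"
    by (simp add: algebra_simps)
  have "d * (1 + 2 * r + 2 * r\<^sup>2) = d + 2 * sqrt (d * L) + 2 * L"
    unfolding e1 dr dr2 ..
  also have "\<dots> < d - 2 * sqrt (d * L) - 2 * (sqrt (2 * L) * q) + q\<^sup>2"
    using t1 t2 t3 q0 zero_less_power[OF q0, of 2] by linarith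
  also have "\<dots> = d * (1 - 2 * r) - 2 * (sqrt (2 * L / q\<^sup>2) * q\<^sup>2) + q\<^sup>2"
  proof -
    have "d * (1 - 2 * r) = d - 2 * (d * r)" by (simp add: algebra_simps)
    then show ?thesis unfolding cv' dr by linarith
  qed
  also have "\<dots> \<le> Y + 2 * cv + q\<^sup>2" using Y cv by linarith
  finally show ?thesis .
qed

lemma rel_sep_le:
  fixes \<theta> :: "'n::finite \<Rightarrow> 'd::finite \<Rightarrow> real"
  assumes "a \<noteq> b"
  shows "rel_sep \<theta> \<sigma> \<le> eucl_norm (\<lambda>k. \<theta> a k - \<theta> b k) / sqrt ((\<sigma> a)\<^sup>2 + (\<sigma> b)\<^sup>2)"
proof -
  let ?f = "\<lambda>(i, j). eucl_norm (\<lambda>k. \<theta> i k - \<theta> j k) / sqrt ((\<sigma> i)\<^sup>2 + (\<sigma> j)\<^sup>2)"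
  have "{eucl_norm (\<lambda>k. \<theta> i k - \<theta> j k) / sqrt ((\<sigma> i)\<^sup>2 + (\<sigma> j)\<^sup>2) | i j. i \<noteq> j} \<subseteq> ?f ` UNIV"
    by auto
  then have fin: "finite {eucl_norm (\<lambda>k. \<theta> i k - \<theta> j k) / sqrt ((\<sigma> i)\<^sup>2 + (\<sigma> j)\<^sup>2) | i j. i \<noteq> j}"
    by (rule finite_subset) simp
  show ?thesis unfolding rel_sep_def
    by (rule Min_le[OF fin]) (use assms in blast)
qed



lemma D_decomp:
  fixes \<theta> :: "'n::finite \<Rightarrow> 'd::finite \<Rightarrow> real"
  assumes sp: "\<And>i. \<sigma> i > 0"
  shows "sqdist (fst \<omega> a) (snd \<omega> i) / ((\<sigma> a)\<^sup>2 + (\<sigma> (\<pi> i))\<^sup>2)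
    = (\<Sum>k\<in>UNIV. (Vd \<theta> \<sigma> \<pi> a i \<omega> k)\<^sup>2)
      + 2 * (\<Sum>k\<in>UNIV. ((\<theta> a k - \<theta> (\<pi> i) k) / Sd \<sigma> \<pi> a i) * Vd \<theta> \<sigma> \<pi> a i \<omega> k)
      + (\<Sum>k\<in>UNIV. ((\<theta> a k - \<theta> (\<pi> i) k) / Sd \<sigma> \<pi> a i)\<^sup>2)"
proof -
  let ?S = "Sd \<sigma> \<pi> a i"
  have S: "?S > 0" by (rule Sd_pos) (rule sp)
  have S2: "?S\<^sup>2 = (\<sigma> a)\<^sup>2 + (\<sigma> (\<pi> i))\<^sup>2"
    unfolding Sd_def by (simp add: add_nonneg_nonneg)
  have pt: "(fst \<omega> a k - snd \<omega> i k)\<^sup>2 / ?S\<^sup>2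
      = (Vd \<theta> \<sigma> \<pi> a i \<omega> k)\<^sup>2 + 2 * (((\<theta> a k - \<theta> (\<pi> i) k) / ?S) * Vd \<theta> \<sigma> \<pi> a i \<omega> k)
        + ((\<theta> a k - \<theta> (\<pi> i) k) / ?S)\<^sup>2" for k
  proof -
    have "(fst \<omega> a k - snd \<omega> i k) / ?S = Vd \<theta> \<sigma> \<pi> a i \<omega> k + (\<theta> a k - \<theta> (\<pi> i) k) / ?S"
      unfolding Vd_def using S by (simp add: field_simps)
    then have "((fst \<omega> a k - snd \<omega> i k) / ?S)\<^sup>2 = (Vd \<theta> \<sigma> \<pi> a i \<omega> k + (\<theta> a k - \<theta> (\<pi> i) k) / ?S)\<^sup>2"
      by simp
    then show ?thesis by (simp add: power_divide power2_sum algebra_simps)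
  qed
  have "sqdist (fst \<omega> a) (snd \<omega> i) / ((\<sigma> a)\<^sup>2 + (\<sigma> (\<pi> i))\<^sup>2) = (\<Sum>k\<in>UNIV. (fst \<omega> a k - snd \<omega> i k)\<^sup>2 / ?S\<^sup>2)"
    unfolding sqdist_def S2[symmetric] by (simp add: sum_divide_distrib)
  also have "\<dots> = (\<Sum>k\<in>UNIV. (Vd \<theta> \<sigma> \<pi> a i \<omega> k)\<^sup>2 + 2 * (((\<theta> a k - \<theta> (\<pi> i) k) / ?S) * Vd \<theta> \<sigma> \<pi> a i \<omega> k)
        + ((\<theta> a k - \<theta> (\<pi> i) k) / ?S)\<^sup>2)" unfolding pt ..
  finally show ?thesis by (simp add: sum.distrib sum_distrib_left)
qed

lemma nu_eq:
  fixes \<theta> :: "'n::finite \<Rightarrow> 'd::finite \<Rightarrow> real"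
  assumes sp: "\<And>i. \<sigma> i > 0"
  shows "sqrt (\<Sum>k\<in>UNIV. ((\<theta> a k - \<theta> (\<pi> i) k) / Sd \<sigma> \<pi> a i)\<^sup>2)
       = eucl_norm (\<lambda>k. \<theta> a k - \<theta> (\<pi> i) k) / sqrt ((\<sigma> a)\<^sup>2 + (\<sigma> (\<pi> i))\<^sup>2)"
proof -
  let ?S = "Sd \<sigma> \<pi> a i"
  have S: "?S > 0" by (rule Sd_pos) (rule sp)
  have "(\<Sum>k\<in>UNIV. ((\<theta> a k - \<theta> (\<pi> i) k) / ?S)\<^sup>2) = (\<Sum>k\<in>UNIV. (\<theta> a k - \<theta> (\<pi> i) k)\<^sup>2) / ?S\<^sup>2"
    by (simp add: power_divide sum_divide_distrib)
  then have "sqrt (\<Sum>k\<in>UNIV. ((\<theta> a k - \<theta> (\<pi> i) k) / ?S)\<^sup>2) = sqrt (\<Sum>k\<in>UNIV. (\<theta> a k - \<theta> (\<pi> i) k)\<^sup>2) / ?S"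
    using S by (simp add: real_sqrt_divide)
  then show ?thesis unfolding eucl_norm_def Sd_def by simp
qed

lemma aux_div: "(y::real) \<noteq> 0 \<Longrightarrow> x = x / y * y"
  by simp

lemma good_implies:
  fixes \<theta> :: "'n::finite \<Rightarrow> 'd::finite \<Rightarrow> real" and \<sigma> :: "'n \<Rightarrow> real"
    and est :: "('n \<Rightarrow> real) \<Rightarrow> ('n, 'd) obs \<Rightarrow> 'n \<Rightarrow> 'n"
  assumes sp: "\<And>i. \<sigma> i > 0" and pp: "\<pi> permutes UNIV"
    and est: "is_LSNS \<sigma> est \<or> is_LSL \<sigma> est"
    and M: "M > 0"
    and pos: "\<And>i. \<exists>k. fst \<omega> (\<pi> i) k \<noteq> snd \<omega> i k"
    and le: "\<And>i. sqdist (fst \<omega> (\<pi> i)) (snd \<omega> i) / ((\<sigma> (\<pi> i))\<^sup>2 + (\<sigma> (\<pi> i))\<^sup>2) \<le> M"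
    and gt: "\<And>i a. a \<noteq> \<pi> i \<Longrightarrow> sqdist (fst \<omega> a) (snd \<omega> i) / ((\<sigma> a)\<^sup>2 + (\<sigma> (\<pi> i))\<^sup>2) > M"
  shows "est (\<sigma> \<circ> \<pi>) \<omega> = \<pi>"
proof (rule ccontr)
  assume ne: "est (\<sigma> \<circ> \<pi>) \<omega> \<noteq> \<pi>"
  define D where "D a i = sqdist (fst \<omega> a) (snd \<omega> i) / ((\<sigma> a)\<^sup>2 + (\<sigma> (\<pi> i))\<^sup>2)" for a i
  let ?t = "est (\<sigma> \<circ> \<pi>) \<omega>"
  have le': "D (\<pi> i) i \<le> M" for i using le[of i] by (simp add: D_def)
  have gt': "a \<noteq> \<pi> i \<Longrightarrow> D a i > M" for a i using gt[of a i] by (simp add: D_def)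
  have den: "(\<sigma> a)\<^sup>2 + (\<sigma> b)\<^sup>2 > 0" for a b using sp[of a] by (simp add: add_pos_nonneg)
  have pos': "D (\<pi> i) i > 0" for i
  proof -
    obtain k where k: "fst \<omega> (\<pi> i) k \<noteq> snd \<omega> i k" using pos[of i] by blast
    have "0 < (fst \<omega> (\<pi> i) k - snd \<omega> i k)\<^sup>2" using k by simp
    also have "\<dots> \<le> sqdist (fst \<omega> (\<pi> i)) (snd \<omega> i)"
      unfolding sqdist_def by (rule member_le_sum) auto
    finally show ?thesis unfolding D_def using den[of "\<pi> i" "\<pi> i"] by (intro divide_pos_pos)
  qed
  have sq: "sqdist (fst \<omega> a) (snd \<omega> i) = D a i * ((\<sigma> a)\<^sup>2 + (\<sigma> (\<pi> i))\<^sup>2)" for a i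
    unfolding D_def by (rule aux_div) (use den[of a "\<pi> i"] in linarith)
  from est show False
  proof
    assume "is_LSNS \<sigma> est"
    then have tp: "?t permutes UNIV" and mn: "crit_LSNS \<sigma> (\<sigma> \<circ> \<pi>) \<omega> ?t \<le> crit_LSNS \<sigma> (\<sigma> \<circ> \<pi>) \<omega> \<pi>"
      using pp unfolding is_LSNS_def by blast+
    have cr: "crit_LSNS \<sigma> (\<sigma> \<circ> \<pi>) \<omega> \<tau> = (\<Sum>i\<in>UNIV. D (\<tau> i) i)" for \<tau>
      by (simp add: crit_LSNS_def D_def)
    have "crit_LSNS \<sigma> (\<sigma> \<circ> \<pi>) \<omega> \<pi> < crit_LSNS \<sigma> (\<sigma> \<circ> \<pi>) \<omega> ?t"
      unfolding cr
      by (rule det_LSNS[where D=D and \<pi>=\<pi> and \<tau>="est (\<sigma> \<circ> \<pi>) \<omega>" and M=M, OF ne le' gt'])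
    then show False using mn by simp
  next
    assume "is_LSL \<sigma> est"
    then have tp: "?t permutes UNIV" and mn: "crit_LSL \<omega> ?t \<le> crit_LSL \<omega> \<pi>"
      using pp unfolding is_LSL_def by blast+
    have "crit_LSL \<omega> \<pi> < crit_LSL \<omega> ?t"
      unfolding crit_LSL_def sq
      by (rule det_LSL[where D=D and \<sigma>=\<sigma> and \<pi>=\<pi> and \<tau>="est (\<sigma> \<circ> \<pi>) \<omega>" and M=M, OF pp tp ne sp M pos' le' gt'])
    then show False using mn by simp
  qed
qed



lemma key_bound:
  fixes \<theta> :: "'n::finite \<Rightarrow> 'd::finite \<Rightarrow> real" and \<sigma> :: "'n \<Rightarrow> real"
    and est :: "('n \<Rightarrow> real) \<Rightarrow> ('n, 'd) obs \<Rightarrow> 'n \<Rightarrow> 'n"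
  assumes sp: "\<And>i. \<sigma> i > 0" and pp: "\<pi> permutes UNIV"
    and est: "is_LSNS \<sigma> est \<or> is_LSL \<sigma> est"
    and L: "L > 0" and La: "2 * (real CARD('n))\<^sup>2 * exp (- L) \<le> \<alpha>"
    and K1: "4 * sqrt (2 * L) \<le> K" and K2: "16 * sqrt (real CARD('d) * L) \<le> K\<^sup>2"
    and R: "rel_sep \<theta> \<sigma> > K"
  shows "measure (data_law \<theta> \<sigma> \<pi>) {\<omega> \<in> space (data_law \<theta> \<sigma> \<pi>). est (\<sigma> \<circ> \<pi>) \<omega> \<noteq> \<pi>} \<le> \<alpha>"
proof -
  let ?P = "data_law \<theta> \<sigma> \<pi>"
  interpret P: prob_space ?P by (rule prob_data_law[OF sp])
  define d where "d = real CARD('d)"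
  have d: "d > 0" by (simp add: d_def)
  define r where "r = sqrt (L / d)"
  have r: "r > 0" using L d by (simp add: r_def)
  have dr2: "d * r\<^sup>2 = L" using L d by (simp add: r_def)
  define M where "M = d * (1 + 2 * r + 2 * r\<^sup>2)"
  have M: "M > 0" using d r by (simp add: M_def add_pos_nonneg)
  have K0: "K \<ge> 0" using K1 real_sqrt_ge_zero[of "2 * L"] L by linarith
  define Y where "Y a i \<omega> = (\<Sum>k\<in>UNIV. (Vd \<theta> \<sigma> \<pi> a i \<omega> k)\<^sup>2)" for a i \<omega>
  define c where "c a i k = (\<theta> a k - \<theta> (\<pi> i) k) / Sd \<sigma> \<pi> a i" for a i k
  define \<nu> where "\<nu> a i = (\<Sum>k\<in>UNIV. (c a i k)\<^sup>2)" for a i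
  define \<tau> where "\<tau> a i = sqrt (2 * L / \<nu> a i)" for a i
  define CV where "CV a i \<omega> = (\<Sum>k\<in>UNIV. c a i k * Vd \<theta> \<sigma> \<pi> a i \<omega> k)" for a i \<omega>
  have nu_big: "sqrt (\<nu> a i) > K" if "a \<noteq> \<pi> i" for a i
  proof -
    have "sqrt (\<nu> a i) = eucl_norm (\<lambda>k. \<theta> a k - \<theta> (\<pi> i) k) / sqrt ((\<sigma> a)\<^sup>2 + (\<sigma> (\<pi> i))\<^sup>2)"
      unfolding \<nu>_def c_def by (rule nu_eq[where \<sigma>=\<sigma>, OF sp])
    also have "\<dots> \<ge> rel_sep \<theta> \<sigma>" by (rule rel_sep_le[OF that])
    finally show ?thesis using R by simp
  qed
  have nu_pos: "\<nu> a i > 0" if "a \<noteq> \<pi> i" for a i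
  proof -
    have "sqrt (\<nu> a i) > 0" using nu_big[OF that] K0 by linarith
    then show ?thesis by simp
  qed
  define Bad where "Bad a i = (if a = \<pi> i
      then {\<omega> \<in> space ?P. \<forall>k. fst \<omega> a k = snd \<omega> i k} \<union> {\<omega> \<in> space ?P. Y a i \<omega> > M}
      else {\<omega> \<in> space ?P. Y a i \<omega> < d * (1 - 2 * r)} \<union> {\<omega> \<in> space ?P. CV a i \<omega> < - \<tau> a i * \<nu> a i})" for a i
  have sets1: "{\<omega> \<in> space ?P. \<forall>k. fst \<omega> a k = snd \<omega> i k} \<in> sets ?P" for a i
  proof -
    have "{\<omega> \<in> space obs_space. \<forall>k. fst \<omega> a k = snd \<omega> i k} \<in> sets obs_space"
      unfolding obs_space_def by measurable
    then show ?thesis by (simp add: space_data_law sets_data_law)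
  qed
  have Bad_sets: "Bad a i \<in> sets ?P" for a i
    unfolding Bad_def Y_def CV_def using sets1 by (auto simp del: space_data_law)
  have Bad_meas: "measure ?P (Bad a i) \<le> 2 * exp (- L)" for a i
  proof (cases "a = \<pi> i")
    case True
    have "measure ?P (Bad a i) \<le> measure ?P {\<omega> \<in> space ?P. \<forall>k. fst \<omega> a k = snd \<omega> i k} + measure ?P {\<omega> \<in> space ?P. Y a i \<omega> > M}"
    proof -
      have "{\<omega> \<in> space ?P. Y a i \<omega> > M} \<in> sets ?P" unfolding Y_def by measurable
      then show ?thesis unfolding Bad_def using True measure_Un_le[OF sets1] by simp
    qed
    also have "\<dots> \<le> 0 + exp (- L)"
    proof (rule add_mono)
      show "measure ?P {\<omega> \<in> space ?P. \<forall>k. fst \<omega> a k = snd \<omega> i k} \<le> 0"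
        using True tail_null[where \<sigma>=\<sigma> and \<theta>=\<theta> and \<pi>=\<pi> and a="\<pi> i" and i=i, OF sp] by simp
      have "measure ?P {\<omega> \<in> space ?P. Y a i \<omega> > M} \<le> exp (- d * r\<^sup>2)"
        unfolding Y_def M_def d_def by (rule tail_upper[where \<sigma>=\<sigma>, OF sp r])
      then show "measure ?P {\<omega> \<in> space ?P. Y a i \<omega> > M} \<le> exp (- L)" using dr2 by simp
    qed
    finally have "measure ?P (Bad a i) \<le> exp (- L)" by simp
    moreover have "exp (- L) \<le> 2 * exp (- L)" by simp
    ultimately show ?thesis by linarith
  next
    case False
    have "measure ?P (Bad a i) \<le> measure ?P {\<omega> \<in> space ?P. Y a i \<omega> < d * (1 - 2 * r)} + measure ?P {\<omega> \<in> space ?P. CV a i \<omega> < - \<tau> a i * \<nu> a i}"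
    proof -
      have "{\<omega> \<in> space ?P. Y a i \<omega> < d * (1 - 2 * r)} \<in> sets ?P" unfolding Y_def by measurable
      moreover have "{\<omega> \<in> space ?P. CV a i \<omega> < - \<tau> a i * \<nu> a i} \<in> sets ?P" unfolding CV_def by measurable
      ultimately show ?thesis unfolding Bad_def using False measure_Un_le by simp
    qed
    also have "\<dots> \<le> exp (- L) + exp (- L)"
    proof (rule add_mono)
      have "measure ?P {\<omega> \<in> space ?P. Y a i \<omega> < d * (1 - 2 * r)} \<le> exp (- d * r\<^sup>2)"
        unfolding Y_def d_def by (rule tail_lower[where \<sigma>=\<sigma>, OF sp r])
      then show "measure ?P {\<omega> \<in> space ?P. Y a i \<omega> < d * (1 - 2 * r)} \<le> exp (- L)" using dr2 by simp
      have nn: "2 * L / \<nu> a i \<ge> 0" using nu_pos[OF False] L by (intro divide_nonneg_pos) auto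
      have t0: "\<tau> a i \<ge> 0" using nn by (simp add: \<tau>_def)
      have "measure ?P {\<omega> \<in> space ?P. CV a i \<omega> < - \<tau> a i * \<nu> a i} \<le> exp (- (\<tau> a i)\<^sup>2 * \<nu> a i / 2)"
        unfolding CV_def \<nu>_def by (rule tail_lin[where \<sigma>=\<sigma>, OF sp t0])
      moreover have e: "(\<tau> a i)\<^sup>2 * \<nu> a i / 2 = L"
        using nn nu_pos[OF False] by (simp add: \<tau>_def)
      moreover have "- (\<tau> a i)\<^sup>2 * \<nu> a i / 2 = - L" using e by simp
      ultimately show "measure ?P {\<omega> \<in> space ?P. CV a i \<omega> < - \<tau> a i * \<nu> a i} \<le> exp (- L)" by simp
    qed
    finally show ?thesis by simp
  qed
  have sub: "{\<omega> \<in> space ?P. est (\<sigma> \<circ> \<pi>) \<omega> \<noteq> \<pi>} \<subseteq> (\<Union>p\<in>UNIV. Bad (fst p) (snd p))"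
  proof
    fix \<omega> assume om: "\<omega> \<in> {\<omega> \<in> space ?P. est (\<sigma> \<circ> \<pi>) \<omega> \<noteq> \<pi>}"
    show "\<omega> \<in> (\<Union>p\<in>UNIV. Bad (fst p) (snd p))"
    proof (rule ccontr)
      assume nb: "\<omega> \<notin> (\<Union>p\<in>UNIV. Bad (fst p) (snd p))"
      then have nb': "\<omega> \<notin> Bad a i" for a i by (metis UNIV_I UN_I fst_conv snd_conv)
      have sp': "\<omega> \<in> space ?P" using om by simp
      have "est (\<sigma> \<circ> \<pi>) \<omega> = \<pi>"
      proof (rule good_implies[where \<sigma>=\<sigma>, OF sp pp est M])
        fix i
        show "\<exists>k. fst \<omega> (\<pi> i) k \<noteq> snd \<omega> i k"
          using nb'[of "\<pi> i" i] sp' unfolding Bad_def by auto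
        have c0: "c (\<pi> i) i k = 0" for k by (simp add: c_def)
        have "sqdist (fst \<omega> (\<pi> i)) (snd \<omega> i) / ((\<sigma> (\<pi> i))\<^sup>2 + (\<sigma> (\<pi> i))\<^sup>2) = Y (\<pi> i) i \<omega>"
          using D_decomp[where \<sigma>=\<sigma> and \<theta>=\<theta> and \<pi>=\<pi> and a="\<pi> i" and i=i and \<omega>=\<omega>, OF sp] c0 unfolding Y_def c_def by simp
        also have "\<dots> \<le> M" using nb'[of "\<pi> i" i] sp' unfolding Bad_def by auto
        finally show "sqdist (fst \<omega> (\<pi> i)) (snd \<omega> i) / ((\<sigma> (\<pi> i))\<^sup>2 + (\<sigma> (\<pi> i))\<^sup>2) \<le> M" .
      next
        fix i a assume ne: "a \<noteq> \<pi> i"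
        have Yg: "Y a i \<omega> \<ge> d * (1 - 2 * r)" and CVg: "CV a i \<omega> \<ge> - \<tau> a i * \<nu> a i"
          using nb'[of a i] sp' ne unfolding Bad_def by auto
        have dec: "sqdist (fst \<omega> a) (snd \<omega> i) / ((\<sigma> a)\<^sup>2 + (\<sigma> (\<pi> i))\<^sup>2) = Y a i \<omega> + 2 * CV a i \<omega> + \<nu> a i"
          unfolding Y_def CV_def \<nu>_def c_def by (rule D_decomp[where \<sigma>=\<sigma>, OF sp])
        have q2: "(sqrt (\<nu> a i))\<^sup>2 = \<nu> a i" using nu_pos[OF ne] by simp
        have "Y a i \<omega> + 2 * CV a i \<omega> + (sqrt (\<nu> a i))\<^sup>2 > d * (1 + 2 * r + 2 * r\<^sup>2)"
        proof (rule arith_main[OF d L nu_big[OF ne] K1 _ r_def Yg])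
          show "16 * sqrt (d * L) \<le> K\<^sup>2" using K2 by (simp add: d_def)
          show "CV a i \<omega> \<ge> - (sqrt (2 * L / (sqrt (\<nu> a i))\<^sup>2) * (sqrt (\<nu> a i))\<^sup>2)"
            using CVg unfolding q2 \<tau>_def by simp
        qed
        then show "sqdist (fst \<omega> a) (snd \<omega> i) / ((\<sigma> a)\<^sup>2 + (\<sigma> (\<pi> i))\<^sup>2) > M"
          unfolding dec M_def q2 .
      qed
      then show False using om by simp
    qed
  qed
  have "measure ?P {\<omega> \<in> space ?P. est (\<sigma> \<circ> \<pi>) \<omega> \<noteq> \<pi>} \<le> measure ?P (\<Union>p\<in>UNIV. Bad (fst p) (snd p))"
    by (rule P.finite_measure_mono[OF sub]) (auto intro: Bad_sets)
  also have "\<dots> \<le> (\<Sum>p\<in>UNIV. measure ?P (Bad (fst p) (snd p)))"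
    by (rule P.finite_measure_subadditive_finite) (auto intro: Bad_sets)
  also have "\<dots> \<le> (\<Sum>p\<in>(UNIV :: ('n \<times> 'n) set). 2 * exp (- L))"
    by (rule sum_mono) (rule Bad_meas)
  also have "\<dots> = 2 * (real CARD('n))\<^sup>2 * exp (- L)"
    by (simp add: UNIV_Times_UNIV[symmetric] card_cartesian_product power2_eq_square del: UNIV_Times_UNIV)
  also have "\<dots> \<le> \<alpha>" by (rule La)
  finally show ?thesis .
qed



theorem theorem3:
  fixes \<sigma> :: "'n::finite \<Rightarrow> real" and \<alpha> :: real
    and est :: "('n \<Rightarrow> real) \<Rightarrow> ('n, 'd::finite) obs \<Rightarrow> 'n \<Rightarrow> 'n"
  assumes n2: "CARD('n) \<ge> 2"
    and alpha: "0 < \<alpha>" "\<alpha> < 1"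
    and sigma_pos: "\<And>i. \<sigma> i > 0"
    and meas: "\<And>\<pi>. \<pi> permutes UNIV \<Longrightarrow> est (\<sigma> \<circ> \<pi>) \<in> obs_space \<rightarrow>\<^sub>M count_space UNIV"
    and est: "is_LSNS \<sigma> est \<or> is_LSL \<sigma> est"
  shows "perceivable_sep \<alpha> \<sigma> est
     \<le> ereal (4 * max (sqrt (2 * ln (8 * real (CARD('n))^2 / \<alpha>)))
                        ((real (CARD('d)) * ln (4 * real (CARD('n))^2 / \<alpha>)) powr (1/4)))"
proof -
  define n where "n = real CARD('n)"
  define d where "d = real CARD('d)"
  define K where "K = 4 * max (sqrt (2 * ln (8 * n^2 / \<alpha>))) ((d * ln (4 * n^2 / \<alpha>)) powr (1/4))"
  define L where "L = ln (2 * n^2 / \<alpha>)"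
  have n: "n \<ge> 2" using n2 by (simp add: n_def)
  have d: "d > 0" by (simp add: d_def)
  have n2a: "2 * n^2 / \<alpha> > 1"
  proof -
    have "n^2 \<ge> 2^2" using n by (intro power_mono) auto
    then have "n^2 \<ge> 4" by simp
    then have "2 * n^2 > \<alpha>" using alpha by simp
    then show ?thesis using alpha by simp
  qed
  have np: "n^2 > 0" using n by simp
  have L: "L > 0" unfolding L_def using n2a by simp
  have La: "2 * n^2 * exp (- L) \<le> \<alpha>"
  proof -
    have ex: "exp L = 2 * n^2 / \<alpha>" unfolding L_def using n2a by simp
    have "exp (- L) = \<alpha> / (2 * n^2)" unfolding exp_minus ex by simp
    then show ?thesis using n alpha by simp
  qed
  have L8: "L \<le> ln (8 * n^2 / \<alpha>)" unfolding L_def using n2a alpha np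
    by (subst ln_le_cancel_iff) (auto intro!: divide_right_mono divide_pos_pos)
  have L4: "L \<le> ln (4 * n^2 / \<alpha>)" unfolding L_def using n2a alpha np
    by (subst ln_le_cancel_iff) (auto intro!: divide_right_mono divide_pos_pos)
  have K1: "4 * sqrt (2 * L) \<le> K"
  proof -
    have "sqrt (2 * L) \<le> sqrt (2 * ln (8 * n^2 / \<alpha>))" using L8 by simp
    then show ?thesis unfolding K_def by linarith
  qed
  have K2: "16 * sqrt (d * L) \<le> K\<^sup>2"
  proof -
    define B where "B = (d * ln (4 * n^2 / \<alpha>)) powr (1/4)"
    have B0: "B \<ge> 0" by (simp add: B_def)
    have dl: "d * ln (4 * n^2 / \<alpha>) \<ge> 0" using d L L4 by simp
    have "B\<^sup>2 = (d * ln (4 * n^2 / \<alpha>)) powr (1/2)"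
      unfolding B_def by (simp add: powr_powr[symmetric] powr_realpow[symmetric] dl power2_eq_square powr_add[symmetric])
    also have "\<dots> = sqrt (d * ln (4 * n^2 / \<alpha>))" using dl by (simp add: powr_half_sqrt)
    finally have B2: "B\<^sup>2 = sqrt (d * ln (4 * n^2 / \<alpha>))" .
    have "sqrt (d * L) \<le> B\<^sup>2" unfolding B2 using L4 d by (simp add: mult_left_mono)
    moreover have "4 * B \<le> K" unfolding K_def B_def by simp
    then have "(4 * B)\<^sup>2 \<le> K\<^sup>2" using B0 by (intro power_mono) auto
    ultimately show ?thesis by (simp add: power_mult_distrib)
  qed
  have K0: "K \<ge> 0" using K1 real_sqrt_ge_zero[of "2 * L"] L by linarith
  have inS: "K + e \<in> {\<kappa>. \<kappa> > 0 \<and>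
        (\<forall>\<pi> (\<theta>::'n \<Rightarrow> 'd \<Rightarrow> real). \<pi> permutes UNIV \<longrightarrow> rel_sep \<theta> \<sigma> > \<kappa> \<longrightarrow>
           measure (data_law \<theta> \<sigma> \<pi>) {\<omega> \<in> space (data_law \<theta> \<sigma> \<pi>). est (\<sigma> \<circ> \<pi>) \<omega> \<noteq> \<pi>} \<le> \<alpha>)}"
    if e: "e > 0" for e
  proof (safe)
    show "K + e > 0" using K0 e by simp
    fix \<pi> :: "'n \<Rightarrow> 'n" and \<theta> :: "'n \<Rightarrow> 'd \<Rightarrow> real"
    assume pp: "\<pi> permutes UNIV" and R: "rel_sep \<theta> \<sigma> > K + e"
    show "measure (data_law \<theta> \<sigma> \<pi>) {\<omega> \<in> space (data_law \<theta> \<sigma> \<pi>). est (\<sigma> \<circ> \<pi>) \<omega> \<noteq> \<pi>} \<le> \<alpha>"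
    proof (rule key_bound[where \<sigma>=\<sigma> and L=L and K=K, OF sigma_pos pp est L])
      show "2 * (real CARD('n))\<^sup>2 * exp (- L) \<le> \<alpha>" using La by (simp add: n_def)
      show "4 * sqrt (2 * L) \<le> K" by (rule K1)
      show "16 * sqrt (real CARD('d) * L) \<le> K\<^sup>2" using K2 by (simp add: d_def)
      show "rel_sep \<theta> \<sigma> > K" using R e by simp
    qed
  qed
  have "perceivable_sep \<alpha> \<sigma> est \<le> ereal K"
    unfolding perceivable_sep_def
  proof (rule ereal_le_epsilon2)
    fix e :: real assume e: "e > 0"
    have "(INF \<kappa> \<in> {\<kappa>. \<kappa> > 0 \<and>
        (\<forall>\<pi> (\<theta>::'n \<Rightarrow> 'd \<Rightarrow> real). \<pi> permutes UNIV \<longrightarrow> rel_sep \<theta> \<sigma> > \<kappa> \<longrightarrow>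
           measure (data_law \<theta> \<sigma> \<pi>) {\<omega> \<in> space (data_law \<theta> \<sigma> \<pi>). est (\<sigma> \<circ> \<pi>) \<omega> \<noteq> \<pi>} \<le> \<alpha>)}. ereal \<kappa>)
        \<le> ereal (K + e)"
      by (rule INF_lower[OF inS[OF e]])
    then show "(INF \<kappa> \<in> {\<kappa>. \<kappa> > 0 \<and>
        (\<forall>\<pi> (\<theta>::'n \<Rightarrow> 'd \<Rightarrow> real). \<pi> permutes UNIV \<longrightarrow> rel_sep \<theta> \<sigma> > \<kappa> \<longrightarrow>
           measure (data_law \<theta> \<sigma> \<pi>) {\<omega> \<in> space (data_law \<theta> \<sigma> \<pi>). est (\<sigma> \<circ> \<pi>) \<omega> \<noteq> \<pi>} \<le> \<alpha>)}. ereal \<kappa>)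
        \<le> ereal K + ereal e" by simp
  qed
  then show ?thesis by (simp add: K_def n_def d_def)
qed


end
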